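(* Let $\alpha>0$, let $W$ be a standard Brownian motion on a filtered probability space $(\Omega,\{\mathscr{F}_t\},\mathbb{P})$, and let $X$ solve $dX_t=-\alpha X_t\,dt+dW_t$, $X_0=0$. Let $X^*_t=\sup_{0\le s\le t}|X_s|$. There exists a function $\phi:\mathbb{R}_+\to\mathbb{R}_+$ satisfying $\phi(\delta)\to0$ as $\delta\to0$ such that for any stopping time $\tau$ with respect to $\{\mathscr{F}_t\}$ and any $\delta,\lambda>0$, \[ \mathbb{P}\big(X^*_\tau\ge2\lambda,\ \log^{1/2}(1+\alpha\tau)<\delta\lambda\big)\le\phi(\delta)\,\mathbb{P}\big(X^*_\tau\ge\lambda\big). \] *)

theory Defs
  imports "HOL-Probability.Probability"
begin

text \<open>A standard (one-dimensional) Brownian motion W with respect to a filtration F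
  (indexed by [0,\<infinity>], as ennreal, so that stopping times may take the value \<infinity>)
  on the probability space M.\<close>
definition brownian_motion_wrt ::
  "'a measure \<Rightarrow> (ennreal \<Rightarrow> 'a measure) \<Rightarrow> (real \<Rightarrow> 'a \<Rightarrow> real) \<Rightarrow> bool" where
  "brownian_motion_wrt M F W \<longleftrightarrow>
     prob_space M \<and> filtration (space M) F \<and> (\<forall>t. sets (F t) \<subseteq> sets M) \<and>
     (\<forall>\<omega>\<in>space M. W 0 \<omega> = 0) \<and>
     (\<forall>\<omega>\<in>space M. continuous_on {0..} (\<lambda>t. W t \<omega>)) \<and>
     (\<forall>t\<ge>0. W t \<in> borel_measurable (F (ennreal t))) \<and>
     (\<forall>s t. 0 \<le> s \<and> s < t \<longrightarrow>
        distributed M lborel (\<lambda>\<omega>. W t \<omega> - W s \<omega>) (normal_density 0 (sqrt (t - s))) \<and>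
        (\<forall>A\<in>sets (F (ennreal s)). \<forall>B\<in>sets borel.
           measure M (A \<inter> ((\<lambda>\<omega>. W t \<omega> - W s \<omega>) -` B \<inter> space M)) =
           measure M A * measure M ((\<lambda>\<omega>. W t \<omega> - W s \<omega>) -` B \<inter> space M)))"

text \<open>X solves dX_t = -\<alpha> X_t dt + dW_t, X_0 = 0 (additive noise, so the SDE is the
  pathwise integral equation X_t = W_t - \<alpha> \<integral>_0^t X_s ds), with continuous adapted paths.\<close>
definition OU_solution ::
  "'a measure \<Rightarrow> (ennreal \<Rightarrow> 'a measure) \<Rightarrow> real \<Rightarrow> (real \<Rightarrow> 'a \<Rightarrow> real) \<Rightarrow> (real \<Rightarrow> 'a \<Rightarrow> real) \<Rightarrow> bool" where
  "OU_solution M F \<alpha> W X \<longleftrightarrow>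
     (\<forall>t\<ge>0. X t \<in> borel_measurable (F (ennreal t))) \<and>
     (\<forall>\<omega>\<in>space M. continuous_on {0..} (\<lambda>t. X t \<omega>) \<and>
        (\<forall>t\<ge>0. X t \<omega> = W t \<omega> - \<alpha> * integral {0..t} (\<lambda>s. X s \<omega>)))"

definition run_max :: "(real \<Rightarrow> 'a \<Rightarrow> real) \<Rightarrow> ('a \<Rightarrow> ennreal) \<Rightarrow> 'a \<Rightarrow> ereal" where
  "run_max X \<tau> \<omega> = (SUP s\<in>{s. 0 \<le> s \<and> ennreal s \<le> \<tau> \<omega>}. ereal \<bar>X s \<omega>\<bar>)"

end

theory Submission
  imports Defs "HOL-Real_Asymp.Real_Asymp"
begin

lemma nd_shift_bound:
  assumes "\<sigma> > 0" "c \<ge> 0" "x \<ge> c"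
  shows "normal_density 0 \<sigma> x \<le> exp (- (c^2) / (2*\<sigma>^2)) * normal_density c \<sigma> x"
proof -
  have "x^2 \<ge> c^2 + (x-c)^2" using assms by (simp add: power2_eq_square algebra_simps) (metis mult_right_mono diff_ge_0_iff_ge mult.commute assms(2))
  then have "-(x^2)/(2*\<sigma>^2) \<le> - (c^2)/(2*\<sigma>^2) + (- ((x-c)^2)/(2*\<sigma>^2))"
    using assms by (simp add: field_simps)
  then have "exp (-(x^2)/(2*\<sigma>^2)) \<le> exp (- (c^2) / (2*\<sigma>^2)) * exp (- ((x-c)^2)/(2*\<sigma>^2))"
    by (simp add: exp_add[symmetric])
  then show ?thesis unfolding normal_density_def
    by (simp add: divide_right_mono)
qed

lemma gauss_tail:
  assumes P: "prob_space M" and D: "distributed M lborel Y (normal_density 0 \<sigma>)"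
    and s: "\<sigma> > 0" and c: "c \<ge> 0"
  shows "measure M {\<omega>\<in>space M. Y \<omega> \<ge> c} \<le> exp (- (c^2) / (2*\<sigma>^2))"
proof -
  interpret prob_space M by fact
  have eq: "{\<omega>\<in>space M. Y \<omega> \<ge> c} = Y -` {c..} \<inter> space M" by auto
  have "emeasure M (Y -` {c..} \<inter> space M) = (\<integral>\<^sup>+x. ennreal (normal_density 0 \<sigma> x) * indicator {c..} x \<partial>lborel)"
    by (rule distributed_emeasure[OF D]) auto
  also have "\<dots> \<le> (\<integral>\<^sup>+x. ennreal (exp (- (c^2) / (2*\<sigma>^2)) * normal_density c \<sigma> x) \<partial>lborel)"
    by (intro nn_integral_mono) (auto split: split_indicator intro!: ennreal_leI nd_shift_bound[OF s c, simplified])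
  also have "\<dots> = ennreal (exp (- (c^2) / (2*\<sigma>^2)) * 1)"
  proof -
    have "(\<integral>\<^sup>+x. ennreal (exp (- (c^2) / (2*\<sigma>^2)) * normal_density c \<sigma> x) \<partial>lborel)
       = ennreal (\<integral>x. exp (- (c^2) / (2*\<sigma>^2)) * normal_density c \<sigma> x \<partial>lborel)"
      by (rule nn_integral_eq_integral) (auto intro: integrable_normal_density[OF s])
    also have "(\<integral>x. exp (- (c^2) / (2*\<sigma>^2)) * normal_density c \<sigma> x \<partial>lborel) = exp (- (c^2) / (2*\<sigma>^2)) * 1"
      using integral_normal_density[OF s] by simp
    finally show ?thesis .
  qed
  finally have "emeasure M {\<omega>\<in>space M. Y \<omega> \<ge> c} \<le> ennreal (exp (- (c^2) / (2*\<sigma>^2)))" using eq by simp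
  then show ?thesis by (simp add: emeasure_eq_measure)
qed

lemma measure_le_superset:
  assumes "finite_measure M" "B \<in> sets M" "A \<subseteq> B"
  shows "measure M A \<le> measure M B"
proof (cases "A \<in> sets M")
  case True then show ?thesis using assms finite_measure.finite_measure_mono by blast
next
  case False then show ?thesis by (simp add: measure_notin_sets)
qed

lemma gauss_half:
  assumes P: "prob_space M" and D: "distributed M lborel Y (normal_density 0 \<sigma>)"
    and s: "\<sigma> > 0"
  shows "measure M {\<omega>\<in>space M. Y \<omega> \<ge> 0} \<ge> 1/2"
proof -
  interpret prob_space M by fact
  have D': "distributed M lborel (\<lambda>x. 0 + (-1) * Y x) (normal_density (0 + (-1) * 0) (\<bar>-1\<bar> * \<sigma>))"
    by (rule normal_density_affine[OF D s]) simp
  then have D2: "distributed M lborel (\<lambda>x. - Y x) (normal_density 0 \<sigma>)" by simp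
  have "emeasure M (Y -` {0..} \<inter> space M) = (\<integral>\<^sup>+x. ennreal (normal_density 0 \<sigma> x) * indicator {0..} x \<partial>lborel)"
    by (rule distributed_emeasure[OF D]) auto
  also have "\<dots> = emeasure M ((\<lambda>x. - Y x) -` {0..} \<inter> space M)"
    by (rule distributed_emeasure[OF D2, symmetric]) auto
  finally have eq: "measure M (Y -` {0..} \<inter> space M) = measure M ((\<lambda>x. - Y x) -` {0..} \<inter> space M)"
    by (simp add: emeasure_eq_measure)
  have mY: "Y \<in> borel_measurable M" using D by (simp add: distributed_def)
  have "1 = measure M (space M)" using prob_space by simp
  also have "space M = (Y -` {0..} \<inter> space M) \<union> ((\<lambda>x. - Y x) -` {0..} \<inter> space M)" by auto
  also have "measure M \<dots> \<le> measure M (Y -` {0..} \<inter> space M) + measure M ((\<lambda>x. - Y x) -` {0..} \<inter> space M)"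
    by (rule measure_Un_le) (use mY in auto)
  finally have "1 \<le> 2 * measure M (Y -` {0..} \<inter> space M)" using eq by simp
  moreover have "{\<omega>\<in>space M. Y \<omega> \<ge> 0} = Y -` {0..} \<inter> space M" by auto
  ultimately show ?thesis by simp
qed

lemma gauss_neg:
  assumes P: "prob_space M" and D: "distributed M lborel Y (normal_density 0 \<sigma>)"
    and s: "\<sigma> > 0"
  shows "distributed M lborel (\<lambda>x. - Y x) (normal_density 0 \<sigma>)"
proof -
  interpret prob_space M by fact
  have D': "distributed M lborel (\<lambda>x. 0 + (-1) * Y x) (normal_density (0 + (-1) * 0) (\<bar>-1\<bar> * \<sigma>))"
    by (rule normal_density_affine[OF D s]) simp
  then show ?thesis by simp
qed

lemma levy_discrete:
  fixes Y :: "nat \<Rightarrow> 'a \<Rightarrow> real" and Fj :: "nat \<Rightarrow> 'a measure"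
  assumes P: "prob_space M"
    and sub: "\<And>j. sets (Fj j) \<subseteq> sets M"
    and mono: "\<And>i j. i \<le> j \<Longrightarrow> sets (Fj i) \<subseteq> sets (Fj j)"
    and spF: "\<And>j. space (Fj j) = space M"
    and meas: "\<And>j. j \<le> n \<Longrightarrow> Y j \<in> borel_measurable (Fj j)"
    and G: "G \<in> sets (Fj 0)"
    and half: "\<And>j A. j < n \<Longrightarrow> A \<in> sets (Fj j) \<Longrightarrow>
                 measure M (A \<inter> {\<omega>\<in>space M. Y n \<omega> - Y j \<omega> \<ge> 0}) \<ge> measure M A / 2"
  shows "measure M (G \<inter> {\<omega>\<in>space M. \<exists>j\<le>n. Y j \<omega> \<ge> c}) \<le> 2 * measure M (G \<inter> {\<omega>\<in>space M. Y n \<omega> \<ge> c})"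
proof -
  interpret prob_space M by fact
  define H where "H j = G \<inter> {\<omega>\<in>space M. Y j \<omega> \<ge> c \<and> (\<forall>i<j. Y i \<omega> < c)}" for j
  have HF: "H j \<in> sets (Fj j)" if "j \<le> n" for j
  proof -
    have "{\<omega>\<in>space M. Y j \<omega> \<ge> c \<and> (\<forall>i<j. Y i \<omega> < c)} \<in> sets (Fj j)"
    proof -
      have m: "Y i \<in> borel_measurable (Fj j)" if "i \<le> j" for i
        using meas[of i] that \<open>j \<le> n\<close> mono[OF that] by (auto simp: measurable_def spF)
      have "{\<omega>\<in>space (Fj j). Y j \<omega> \<ge> c \<and> (\<forall>i<j. Y i \<omega> < c)} \<in> sets (Fj j)"
        using m by measurable
      then show ?thesis by (simp add: spF)
    qed
    moreover have "G \<in> sets (Fj j)" using G mono[of 0 j] by auto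
    ultimately show ?thesis unfolding H_def by auto
  qed
  have HM: "H j \<in> sets M" if "j \<le> n" for j using HF[OF that] sub by auto
  have disj: "disjoint_family_on H {..n}"
    unfolding disjoint_family_on_def H_def
    by (auto, metis linorder_neqE_nat not_less)
  have un: "G \<inter> {\<omega>\<in>space M. \<exists>j\<le>n. Y j \<omega> \<ge> c} = (\<Union>j\<in>{..n}. H j)"
  proof
    show "G \<inter> {\<omega>\<in>space M. \<exists>j\<le>n. Y j \<omega> \<ge> c} \<subseteq> (\<Union>j\<in>{..n}. H j)"
    proof
      fix \<omega> assume \<omega>: "\<omega> \<in> G \<inter> {\<omega>\<in>space M. \<exists>j\<le>n. Y j \<omega> \<ge> c}"
      define j where "j = (LEAST j. Y j \<omega> \<ge> c)"
      from \<omega> obtain j0 where j0: "j0 \<le> n" "Y j0 \<omega> \<ge> c" by auto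
      have "Y j \<omega> \<ge> c" unfolding j_def by (rule LeastI[of _ j0]) (fact j0)
      moreover have "j \<le> j0" unfolding j_def by (rule Least_le) (fact j0)
      moreover have "\<forall>i<j. Y i \<omega> < c" unfolding j_def using not_less_Least by fastforce
      ultimately show "\<omega> \<in> (\<Union>j\<in>{..n}. H j)" using \<omega> j0 unfolding H_def by auto
    qed
  qed (auto simp: H_def)
  define K where "K j = H j \<inter> {\<omega>\<in>space M. Y n \<omega> - Y j \<omega> \<ge> 0}" for j
  have KM: "K j \<in> sets M" if "j \<le> n" for j
  proof -
    have "Y n \<in> borel_measurable M" "Y j \<in> borel_measurable M"
      using meas[of n] meas[of j] that sub by (auto simp: measurable_def spF)
    then have "{\<omega>\<in>space M. Y n \<omega> - Y j \<omega> \<ge> 0} \<in> sets M" by measurable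
    then show ?thesis unfolding K_def using HM[OF that] by auto
  qed
  have HK: "measure M (H j) \<le> 2 * measure M (K j)" if "j \<le> n" for j
  proof (cases "j < n")
    case True then show ?thesis using half[OF True HF[OF that]] unfolding K_def by simp
  next
    case False then have "j = n" using that by simp
    then have "K j = H j" unfolding K_def H_def by auto
    then show ?thesis by simp
  qed
  have disjK: "disjoint_family_on K {..n}"
    using disj unfolding disjoint_family_on_def K_def by blast
  have "measure M (G \<inter> {\<omega>\<in>space M. \<exists>j\<le>n. Y j \<omega> \<ge> c}) = (\<Sum>j\<le>n. measure M (H j))"
    unfolding un by (rule finite_measure_finite_Union) (use HM disj in auto)
  also have "\<dots> \<le> (\<Sum>j\<le>n. 2 * measure M (K j))" by (rule sum_mono) (use HK in auto)
  also have "\<dots> = 2 * measure M (\<Union>j\<in>{..n}. K j)"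
    by (subst finite_measure_finite_Union) (use KM disjK in \<open>auto simp: sum_distrib_left\<close>)
  also have "\<dots> \<le> 2 * measure M (G \<inter> {\<omega>\<in>space M. Y n \<omega> \<ge> c})"
  proof -
    have "Y n \<in> borel_measurable M" using meas[of n] sub by (auto simp: measurable_def spF)
    then have "G \<inter> {\<omega>\<in>space M. Y n \<omega> \<ge> c} \<in> sets M" using G sub[of 0] by auto
    moreover have "(\<Union>j\<in>{..n}. K j) \<subseteq> G \<inter> {\<omega>\<in>space M. Y n \<omega> \<ge> c}"
      unfolding K_def H_def by auto
    ultimately show ?thesis by (simp add: finite_measure_mono)
  qed
  finally show ?thesis .
qed

lemma gauss_sign:
  assumes P: "prob_space M" and D: "distributed M lborel Y (normal_density 0 \<sigma>)"
    and s: "\<sigma> > 0" and e: "\<epsilon> = 1 \<or> \<epsilon> = (-1::real)"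
  shows "distributed M lborel (\<lambda>x. \<epsilon> * Y x) (normal_density 0 \<sigma>)"
proof -
  interpret prob_space M by fact
  have "\<epsilon> \<noteq> 0" using e by auto
  have D': "distributed M lborel (\<lambda>x. 0 + \<epsilon> * Y x) (normal_density (0 + \<epsilon> * 0) (\<bar>\<epsilon>\<bar> * \<sigma>))"
    by (rule normal_density_affine[OF D s]) fact
  then show ?thesis using e by auto
qed

context
  fixes M :: "'a measure" and F :: "ennreal \<Rightarrow> 'a measure" and W :: "real \<Rightarrow> 'a \<Rightarrow> real"
  assumes BM: "brownian_motion_wrt M F W"
begin

lemma bm_prob: "prob_space M" using BM by (simp add: brownian_motion_wrt_def)
lemma bm_filt: "filtration (space M) F" using BM by (simp add: brownian_motion_wrt_def)
lemma bm_sub: "sets (F t) \<subseteq> sets M" using BM by (simp add: brownian_motion_wrt_def)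
lemma bm_space: "space (F t) = space M" using bm_filt by (simp add: filtration_def)
lemma bm_mono: "s \<le> t \<Longrightarrow> sets (F s) \<subseteq> sets (F t)" using bm_filt by (simp add: filtration_def)
lemma bm_W0: "\<omega> \<in> space M \<Longrightarrow> W 0 \<omega> = 0" using BM by (simp add: brownian_motion_wrt_def)
lemma bm_cont: "\<omega> \<in> space M \<Longrightarrow> continuous_on {0..} (\<lambda>t. W t \<omega>)" using BM by (simp add: brownian_motion_wrt_def)
lemma bm_measF: "t \<ge> 0 \<Longrightarrow> W t \<in> borel_measurable (F (ennreal t))" using BM by (simp add: brownian_motion_wrt_def)
lemma measurable_F_M: "f \<in> borel_measurable (F t) \<Longrightarrow> f \<in> borel_measurable M"
  using bm_sub[of t] by (auto simp: measurable_def bm_space)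
lemma measurable_F_mono: "f \<in> borel_measurable (F s) \<Longrightarrow> s \<le> t \<Longrightarrow> f \<in> borel_measurable (F t)"
  using bm_mono[of s t] by (auto simp: measurable_def bm_space)
lemma bm_meas: "t \<ge> 0 \<Longrightarrow> W t \<in> borel_measurable M" using bm_measF measurable_F_M by blast
lemma bm_dist: "0 \<le> s \<Longrightarrow> s < t \<Longrightarrow>
   distributed M lborel (\<lambda>\<omega>. W t \<omega> - W s \<omega>) (normal_density 0 (sqrt (t - s)))"
  using BM by (simp add: brownian_motion_wrt_def)
lemma bm_indep: "0 \<le> s \<Longrightarrow> s < t \<Longrightarrow> A \<in> sets (F (ennreal s)) \<Longrightarrow> B \<in> sets borel \<Longrightarrow>
   measure M (A \<inter> ((\<lambda>\<omega>. W t \<omega> - W s \<omega>) -` B \<inter> space M)) =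
           measure M A * measure M ((\<lambda>\<omega>. W t \<omega> - W s \<omega>) -` B \<inter> space M)"
  using BM unfolding brownian_motion_wrt_def by blast

lemma bm_indep_sign:
  assumes "0 \<le> s" "s < t" "A \<in> sets (F (ennreal s))"
  shows "measure M (A \<inter> {\<omega>\<in>space M. \<epsilon> * (W t \<omega> - W s \<omega>) \<ge> c}) =
           measure M A * measure M {\<omega>\<in>space M. \<epsilon> * (W t \<omega> - W s \<omega>) \<ge> c}"
proof -
  have B: "{x::real. \<epsilon> * x \<ge> c} \<in> sets borel" by measurable
  have e: "{\<omega>\<in>space M. \<epsilon> * (W t \<omega> - W s \<omega>) \<ge> c} = (\<lambda>\<omega>. W t \<omega> - W s \<omega>) -` {x::real. \<epsilon> * x \<ge> c} \<inter> space M"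
    by auto
  show ?thesis unfolding e by (rule bm_indep[OF assms B])
qed

lemma bm_half:
  assumes "0 \<le> s" "s < t" "\<epsilon> = 1 \<or> \<epsilon> = (-1::real)"
  shows "measure M {\<omega>\<in>space M. \<epsilon> * (W t \<omega> - W s \<omega>) \<ge> 0} \<ge> 1/2"
  by (rule gauss_half[OF bm_prob gauss_sign[OF bm_prob bm_dist[OF assms(1,2)] _ assms(3)]])
     (use assms in auto)

lemma bm_tail:
  assumes "0 \<le> s" "s < t" "\<epsilon> = 1 \<or> \<epsilon> = (-1::real)" "c \<ge> 0"
  shows "measure M {\<omega>\<in>space M. \<epsilon> * (W t \<omega> - W s \<omega>) \<ge> c} \<le> exp (- (c^2) / (2 * (t - s)))"
proof -
  have "measure M {\<omega>\<in>space M. \<epsilon> * (W t \<omega> - W s \<omega>) \<ge> c} \<le> exp (- (c^2) / (2 * (sqrt (t - s))^2))"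
    by (rule gauss_tail[OF bm_prob gauss_sign[OF bm_prob bm_dist[OF assms(1,2)] _ assms(3)]])
       (use assms in auto)
  then show ?thesis using assms by simp
qed

lemma levy_sign:
  assumes a: "a \<ge> 0" and L: "L > 0" and e: "\<epsilon> = 1 \<or> \<epsilon> = (-1::real)" and c: "c \<ge> 0"
    and G: "G \<in> sets (F (ennreal a))"
  shows "measure M (G \<inter> {\<omega>\<in>space M. \<exists>j\<le>(2::nat)^m. \<epsilon> * (W (a + real j * L / 2^m) \<omega> - W a \<omega>) \<ge> c})
         \<le> 2 * measure M G * exp (- (c^2) / (2 * L))"
proof -
  interpret prob_space M by (rule bm_prob)
  define t where "t j = a + real j * L / 2^m" for j :: nat
  have t0: "t 0 = a" by (simp add: t_def)
  have tn: "t (2^m) = a + L" by (simp add: t_def)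
  have tmono: "i \<le> j \<Longrightarrow> t i \<le> t j" for i j using L by (simp add: t_def divide_right_mono mult_right_mono)
  have tlt: "j < 2^m \<Longrightarrow> t j < a + L" for j
  proof -
    assume "j < 2^m"
    then have "real j < 2^m" by (metis of_nat_less_iff of_nat_numeral of_nat_power)
    then have "real j * L < 2^m * L" using L by simp
    then have "real j * L / 2^m < L" by (simp add: divide_less_eq mult.commute)
    then show ?thesis by (simp add: t_def)
  qed
  have tpos: "t j \<ge> 0" for j using a L by (simp add: t_def)
  define Y where "Y j \<omega> = \<epsilon> * (W (t j) \<omega> - W a \<omega>)" for j \<omega>
  have "measure M (G \<inter> {\<omega>\<in>space M. \<exists>j\<le>(2::nat)^m. Y j \<omega> \<ge> c}) \<le> 2 * measure M (G \<inter> {\<omega>\<in>space M. Y (2^m) \<omega> \<ge> c})"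
  proof (rule levy_discrete[where Fj = "\<lambda>j. F (ennreal (t j))"])
    show "prob_space M" by (rule bm_prob)
    show "sets (F (ennreal (t j))) \<subseteq> sets M" for j by (rule bm_sub)
    show "sets (F (ennreal (t i))) \<subseteq> sets (F (ennreal (t j)))" if "i \<le> j" for i j
      using tmono[OF that] by (intro bm_mono ennreal_leI)
    show "space (F (ennreal (t j))) = space M" for j by (rule bm_space)
    show "Y j \<in> borel_measurable (F (ennreal (t j)))" if "j \<le> 2^m" for j
    proof -
      have "W a \<in> borel_measurable (F (ennreal (t j)))"
        using measurable_F_mono[OF bm_measF[OF a]] tmono[of 0 j] t0 by (auto intro: ennreal_leI)
      then show ?thesis unfolding Y_def using bm_measF[OF tpos[of j]] by measurable
    qed
    show "G \<in> sets (F (ennreal (t 0)))" using G t0 by simp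
    show "measure M (A \<inter> {\<omega>\<in>space M. Y (2^m) \<omega> - Y j \<omega> \<ge> 0}) \<ge> measure M A / 2"
      if j: "j < 2^m" and A: "A \<in> sets (F (ennreal (t j)))" for j A
    proof -
      have eq: "{\<omega>\<in>space M. Y (2^m) \<omega> - Y j \<omega> \<ge> 0} = {\<omega>\<in>space M. \<epsilon> * (W (a + L) \<omega> - W (t j) \<omega>) \<ge> 0}"
        unfolding Y_def tn by (auto simp: algebra_simps)
      have "measure M (A \<inter> {\<omega>\<in>space M. \<epsilon> * (W (a + L) \<omega> - W (t j) \<omega>) \<ge> 0})
            = measure M A * measure M {\<omega>\<in>space M. \<epsilon> * (W (a + L) \<omega> - W (t j) \<omega>) \<ge> 0}"
        by (rule bm_indep_sign[OF tpos tlt[OF j] A])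
      also have "\<dots> \<ge> measure M A * (1/2)"
        by (rule mult_left_mono[OF bm_half[OF tpos tlt[OF j] e]]) simp
      finally show ?thesis unfolding eq by simp
    qed
  qed
  also have "measure M (G \<inter> {\<omega>\<in>space M. Y (2^m) \<omega> \<ge> c}) = measure M G * measure M {\<omega>\<in>space M. \<epsilon> * (W (a + L) \<omega> - W a \<omega>) \<ge> c}"
    unfolding Y_def tn by (rule bm_indep_sign[OF a _ G]) (use L in simp)
  also have "\<dots> \<le> measure M G * exp (- (c^2) / (2 * (a + L - a)))"
    by (rule mult_left_mono[OF bm_tail[OF a _ e c]]) (use L in auto)
  finally show ?thesis unfolding Y_def t_def by simp
qed

end

lemma dyadic_approx:
  fixes v L \<eta> :: real
  assumes "0 \<le> v" "v \<le> L" "L > 0" "\<eta> > 0"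
  shows "\<exists>m j. j \<le> (2::nat)^m \<and> real j * L / 2^m \<le> v \<and> v - real j * L / 2^m < \<eta>"
proof -
  obtain m :: nat where m: "L / \<eta> < 2^m" using real_arch_pow[of 2 "L/\<eta>"] by auto
  define j where "j = nat \<lfloor>v * 2^m / L\<rfloor>"
  have p: "(0::real) < 2^m" by simp
  have fl: "real j = of_int \<lfloor>v * 2^m / L\<rfloor>" unfolding j_def using assms by simp
  have j1: "real j \<le> v * 2^m / L" using fl by linarith
  have j2: "v * 2^m / L < real j + 1" using fl by linarith
  have "real j \<le> 2^m"
  proof -
    have "v * 2^m / L \<le> 2^m" using assms by (simp add: divide_le_eq)
    then show ?thesis using j1 by linarith
  qed
  then have "j \<le> 2^m" by (metis of_nat_le_iff of_nat_numeral of_nat_power)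
  moreover have "real j * L / 2^m \<le> v" using j1 assms p by (simp add: field_simps)
  moreover have "v - real j * L / 2^m < \<eta>"
  proof -
    have "v * 2^m < (real j + 1) * L" using j2 assms by (simp add: field_simps)
    then have "v < (real j + 1) * L / 2^m" using p by (simp add: field_simps)
    moreover have "L / 2^m < \<eta>" using m assms p by (simp add: field_simps)
    ultimately show ?thesis by (simp add: field_simps)
  qed
  ultimately show ?thesis by blast
qed

definition Ecal :: "'a measure \<Rightarrow> (real \<Rightarrow> 'a \<Rightarrow> real) \<Rightarrow> real \<Rightarrow> real \<Rightarrow> real \<Rightarrow> 'a set" where
  "Ecal M W a L c = (\<Union>m. {\<omega>\<in>space M. \<exists>j\<le>(2::nat)^m. \<bar>W (a + real j * L / 2^m) \<omega> - W a \<omega>\<bar> \<ge> c/2})"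

context
  fixes M :: "'a measure" and F :: "ennreal \<Rightarrow> 'a measure" and W :: "real \<Rightarrow> 'a \<Rightarrow> real"
  assumes BM: "brownian_motion_wrt M F W"
begin

lemma Ecal_sets:
  assumes a: "a \<ge> 0" and L: "L > 0"
  shows "Ecal M W a L c \<in> sets M"
proof -
  have mm: "{\<omega>\<in>space M. \<exists>j\<le>(2::nat)^m. \<bar>W (a + real j * L / 2^m) \<omega> - W a \<omega>\<bar> \<ge> c/2} \<in> sets M" for m
  proof -
    have [measurable]: "\<And>j. W (a + real j * L / 2^m) \<in> borel_measurable M" using bm_meas[OF BM] a L by simp
    moreover have [measurable]: "W a \<in> borel_measurable M" using bm_meas[OF BM] a by simp
    then have "\<And>j. {\<omega>\<in>space M. \<bar>W (a + real j * L / 2^m) \<omega> - W a \<omega>\<bar> \<ge> c/2} \<in> sets M"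
      by measurable
    moreover have "{\<omega>\<in>space M. \<exists>j\<le>(2::nat)^m. \<bar>W (a + real j * L / 2^m) \<omega> - W a \<omega>\<bar> \<ge> c/2}
       = (\<Union>j\<in>{..(2::nat)^m}. {\<omega>\<in>space M. \<bar>W (a + real j * L / 2^m) \<omega> - W a \<omega>\<bar> \<ge> c/2})" by auto
    ultimately show ?thesis by auto
  qed
  show ?thesis unfolding Ecal_def by (rule sets.countable_UN) (use mm in blast)
qed

lemma Ecal_sub:
  assumes a: "a \<ge> 0" and L: "L > 0" and c: "c > 0"
  shows "{\<omega>\<in>space M. \<exists>v\<in>{0..L}. \<bar>W (a+v) \<omega> - W a \<omega>\<bar> \<ge> c} \<subseteq> Ecal M W a L c"
proof
    fix \<omega> assume "\<omega> \<in> {\<omega>\<in>space M. \<exists>v\<in>{0..L}. \<bar>W (a+v) \<omega> - W a \<omega>\<bar> \<ge> c}"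
    then obtain v where \<omega>: "\<omega> \<in> space M" and v: "v \<in> {0..L}" "\<bar>W (a+v) \<omega> - W a \<omega>\<bar> \<ge> c" by auto
    have "continuous_on {0..L} (\<lambda>r. W (a + r) \<omega>)"
      by (rule continuous_on_compose2[OF bm_cont[OF BM \<omega>(1)] continuous_on_add[OF continuous_on_const continuous_on_id]]) (use a in auto)
    then have "continuous (at v within {0..L}) (\<lambda>r. W (a + r) \<omega>)"
      using v(1) continuous_on_eq_continuous_within by blast
    then obtain \<eta> where \<eta>: "\<eta> > 0" "\<And>r. r \<in> {0..L} \<Longrightarrow> dist r v < \<eta> \<Longrightarrow> dist (W (a + r) \<omega>) (W (a + v) \<omega>) < c/2"
    proof -
      have "\<exists>\<eta>>0. \<forall>r\<in>{0..L}. dist r v < \<eta> \<longrightarrow> dist (W (a + r) \<omega>) (W (a + v) \<omega>) < c/2"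
        using \<open>continuous (at v within {0..L}) _\<close>[unfolded continuous_within_eps_delta, rule_format, of "c/2"] c by simp
      then show ?thesis using that by blast
    qed
    obtain m j where mj: "j \<le> (2::nat)^m" "real j * L / 2^m \<le> v" "v - real j * L / 2^m < \<eta>"
      using dyadic_approx[of v L \<eta>] v \<eta> L by auto
    have r: "real j * L / 2^m \<in> {0..L}" using mj v L by auto
    have "dist (W (a + real j * L / 2^m) \<omega>) (W (a + v) \<omega>) < c/2"
      by (rule \<eta>(2)[OF r]) (use mj in \<open>auto simp: dist_real_def\<close>)
    then have "\<bar>W (a + real j * L / 2^m) \<omega> - W a \<omega>\<bar> \<ge> c/2" using v(2) unfolding dist_real_def by linarith
    then show "\<omega> \<in> Ecal M W a L c" unfolding Ecal_def using \<omega> mj by auto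
qed

lemma levy_cont:
  assumes a: "a \<ge> 0" and L: "L > 0" and c: "c > 0"
    and G: "G \<in> sets (F (ennreal a))"
  shows "measure M (G \<inter> Ecal M W a L c) \<le> 4 * measure M G * exp (- (c^2) / (8 * L))"
proof -
  interpret prob_space M by (rule bm_prob[OF BM])
  define U where "U m = G \<inter> {\<omega>\<in>space M. \<exists>j\<le>(2::nat)^m. \<bar>W (a + real j * L / 2^m) \<omega> - W a \<omega>\<bar> \<ge> c/2}" for m
  have GM: "G \<in> sets M" using G bm_sub[OF BM] by auto
  have UM: "U m \<in> sets M" for m
  proof -
    have [measurable]: "\<And>j. W (a + real j * L / 2^m) \<in> borel_measurable M" using bm_meas[OF BM] a L by simp
    moreover have [measurable]: "W a \<in> borel_measurable M" using bm_meas[OF BM] a by simp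
    then have "\<And>j. {\<omega>\<in>space M. \<bar>W (a + real j * L / 2^m) \<omega> - W a \<omega>\<bar> \<ge> c/2} \<in> sets M"
      by measurable
    moreover have "{\<omega>\<in>space M. \<exists>j\<le>(2::nat)^m. \<bar>W (a + real j * L / 2^m) \<omega> - W a \<omega>\<bar> \<ge> c/2}
       = (\<Union>j\<in>{..(2::nat)^m}. {\<omega>\<in>space M. \<bar>W (a + real j * L / 2^m) \<omega> - W a \<omega>\<bar> \<ge> c/2})" by auto
    ultimately have "{\<omega>\<in>space M. \<exists>j\<le>(2::nat)^m. \<bar>W (a + real j * L / 2^m) \<omega> - W a \<omega>\<bar> \<ge> c/2} \<in> sets M"
      by auto
    then show ?thesis unfolding U_def using GM by auto
  qed
  have Ub: "measure M (U m) \<le> 4 * measure M G * exp (- (c^2) / (8 * L))" for m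
  proof -
    have "U m \<subseteq> (G \<inter> {\<omega>\<in>space M. \<exists>j\<le>(2::nat)^m. 1 * (W (a + real j * L / 2^m) \<omega> - W a \<omega>) \<ge> c/2})
               \<union> (G \<inter> {\<omega>\<in>space M. \<exists>j\<le>(2::nat)^m. (-1) * (W (a + real j * L / 2^m) \<omega> - W a \<omega>) \<ge> c/2})"
      unfolding U_def by (auto simp: abs_real_def split: if_splits)
    have m1: "(G \<inter> {\<omega>\<in>space M. \<exists>j\<le>(2::nat)^m. \<epsilon> * (W (a + real j * L / 2^m) \<omega> - W a \<omega>) \<ge> c/2}) \<in> sets M" for \<epsilon>
    proof -
      have [measurable]: "\<And>j. W (a + real j * L / 2^m) \<in> borel_measurable M" using bm_meas[OF BM] a L by simp
      moreover have [measurable]: "W a \<in> borel_measurable M" using bm_meas[OF BM] a by simp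
      then have "\<And>j. {\<omega>\<in>space M. \<epsilon> * (W (a + real j * L / 2^m) \<omega> - W a \<omega>) \<ge> c/2} \<in> sets M"
        by measurable
      moreover have "{\<omega>\<in>space M. \<exists>j\<le>(2::nat)^m. \<epsilon> * (W (a + real j * L / 2^m) \<omega> - W a \<omega>) \<ge> c/2}
         = (\<Union>j\<in>{..(2::nat)^m}. {\<omega>\<in>space M. \<epsilon> * (W (a + real j * L / 2^m) \<omega> - W a \<omega>) \<ge> c/2})" by auto
      ultimately have "{\<omega>\<in>space M. \<exists>j\<le>(2::nat)^m. \<epsilon> * (W (a + real j * L / 2^m) \<omega> - W a \<omega>) \<ge> c/2} \<in> sets M"
        by auto
      then show ?thesis using GM by auto
    qed
    have "measure M (U m) \<le> measure M ((G \<inter> {\<omega>\<in>space M. \<exists>j\<le>(2::nat)^m. 1 * (W (a + real j * L / 2^m) \<omega> - W a \<omega>) \<ge> c/2})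
               \<union> (G \<inter> {\<omega>\<in>space M. \<exists>j\<le>(2::nat)^m. (-1) * (W (a + real j * L / 2^m) \<omega> - W a \<omega>) \<ge> c/2}))"
      by (rule finite_measure_mono[OF \<open>U m \<subseteq> _\<close>]) (intro sets.Un m1)
    also have "\<dots> \<le> measure M (G \<inter> {\<omega>\<in>space M. \<exists>j\<le>(2::nat)^m. 1 * (W (a + real j * L / 2^m) \<omega> - W a \<omega>) \<ge> c/2})
               + measure M (G \<inter> {\<omega>\<in>space M. \<exists>j\<le>(2::nat)^m. (-1) * (W (a + real j * L / 2^m) \<omega> - W a \<omega>) \<ge> c/2})"
      by (rule measure_Un_le) (rule m1)+
    also have "\<dots> \<le> 2 * measure M G * exp (- ((c/2)^2) / (2 * L)) + 2 * measure M G * exp (- ((c/2)^2) / (2 * L))"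
      by (intro add_mono levy_sign[OF BM a L _ _ G]) (use c in auto)
    also have "\<dots> = 4 * measure M G * exp (- (c^2) / (8 * L))"
    proof -
      have "- ((c/2)^2) / (2 * L) = - (c^2) / (8 * L)" by (simp add: power2_eq_square field_simps)
      then show ?thesis by simp
    qed
    finally show ?thesis .
  qed
  have inc: "incseq U"
  proof (rule incseq_SucI)
    fix m show "U m \<subseteq> U (Suc m)"
    proof
      fix \<omega> assume "\<omega> \<in> U m"
      then obtain j where j: "j \<le> 2^m" "\<bar>W (a + real j * L / 2^m) \<omega> - W a \<omega>\<bar> \<ge> c/2" "\<omega> \<in> G" "\<omega> \<in> space M"
        unfolding U_def by auto
      have "real (2*j) * L / 2^Suc m = real j * L / 2^m" by simp
      moreover have "2*j \<le> 2^Suc m" using j by simp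
      ultimately show "\<omega> \<in> U (Suc m)" unfolding U_def using j by (auto intro!: exI[of _ "2*j"])
    qed
  qed
  have sub: "G \<inter> Ecal M W a L c = (\<Union>m. U m)" unfolding U_def Ecal_def by (rule Int_UN_distrib)
  have lim: "(\<lambda>m. measure M (U m)) \<longlonglongrightarrow> measure M (\<Union>m. U m)"
    by (rule finite_Lim_measure_incseq) (use UM inc in auto)
  have "measure M (\<Union>m. U m) \<le> 4 * measure M G * exp (- (c^2) / (8 * L))"
    by (rule LIMSEQ_le_const2[OF lim]) (use Ub in auto)
  then show ?thesis unfolding sub .
qed

end

lemma ou_step:
  fixes x w :: "real \<Rightarrow> real"
  assumes \<alpha>: "\<alpha> > 0" and cx: "continuous_on {0..} x"
    and eq: "\<And>t. t \<ge> 0 \<Longrightarrow> x t = w t - \<alpha> * integral {0..t} x"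
    and t0: "0 \<le> t0" "t0 \<le> t"
    and D: "\<And>r. t0 \<le> r \<Longrightarrow> r \<le> t \<Longrightarrow> \<bar>w r - w t0\<bar> \<le> D"
  shows "\<bar>x t - x t0 * exp (- \<alpha> * (t - t0))\<bar> \<le> 2 * D"
proof -
  define Y where "Y r = integral {0..r} x" for r
  have dY: "(Y has_real_derivative x r) (at r)" if "0 < r" for r
  proof -
    have "(Y has_real_derivative x r) (at r within {0..r+1})"
      unfolding Y_def by (rule integral_has_real_derivative) (use continuous_on_subset[OF cx] that in auto)
    moreover have "at r within {0..r+1} = at r" by (rule at_within_Icc_at) (use that in auto)
    ultimately show ?thesis by simp
  qed
  have cY: "continuous_on {t0..t} Y"
  proof -
    have "continuous_on {0..t} Y" unfolding Y_def
      by (rule indefinite_integral_continuous_1, rule integrable_continuous_interval)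
         (use continuous_on_subset[OF cx] in auto)
    then show ?thesis by (rule continuous_on_subset) (use t0 in auto)
  qed
  define q where "q r = Y r - Y t0 - x t0 * (1 - exp (-\<alpha> * (r - t0))) / \<alpha>" for r
  have key: "x r - x t0 * exp (-\<alpha> * (r - t0)) = (w r - w t0) - \<alpha> * q r" if "r \<ge> 0" for r
    using eq[OF that] eq[OF t0(1)] \<alpha> unfolding q_def Y_def by (simp add: field_simps) (metis distrib_left)
  define h where "h s r = D * (exp (\<alpha> * (r - t0)) - 1) / \<alpha> - s * (exp (\<alpha> * (r - t0)) * q r)" for s r
  have hmono: "h s t0 \<le> h s t" if s: "s = 1 \<or> s = -1" for s
  proof (rule DERIV_nonneg_imp_increasing_open[OF t0(2)])
    fix r assume r: "t0 < r" "r < t"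
    have d: "DERIV (h s) r :> D * (exp (\<alpha> * (r - t0)) * \<alpha>) / \<alpha> - s * (exp (\<alpha> * (r - t0)) * \<alpha> * q r
              + exp (\<alpha> * (r - t0)) * (x r - x t0 * (exp (-\<alpha> * (r - t0)) * \<alpha>) / \<alpha>))"
      unfolding h_def q_def using r t0
      by (auto intro!: derivative_eq_intros dY simp: algebra_simps mult_exp_exp) (simp add: field_simps)
    have "D * (exp (\<alpha> * (r - t0)) * \<alpha>) / \<alpha> - s * (exp (\<alpha> * (r - t0)) * \<alpha> * q r
              + exp (\<alpha> * (r - t0)) * (x r - x t0 * (exp (-\<alpha> * (r - t0)) * \<alpha>) / \<alpha>))
          = exp (\<alpha> * (r - t0)) * (D - s * (\<alpha> * q r + (x r - x t0 * exp (-\<alpha> * (r - t0)))))"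
      using \<alpha> by (simp add: field_simps)
    also have "\<dots> = exp (\<alpha> * (r - t0)) * (D - s * (w r - w t0))"
      using key[of r] r t0 by simp
    also have "\<dots> \<ge> 0"
    proof -
      have "\<bar>w r - w t0\<bar> \<le> D" using D[of r] r by simp
      then have "s * (w r - w t0) \<le> D" using s by (auto simp: abs_le_iff)
      then show ?thesis by simp
    qed
    finally show "\<exists>y. DERIV (h s) r :> y \<and> 0 \<le> y" using d by blast
  next
    show "continuous_on {t0..t} (h s)" unfolding h_def q_def
      by (intro continuous_intros cY) (use \<alpha> in auto)
  qed
  have ht0: "q t0 = 0" by (simp add: q_def)
  define E where "E = exp (\<alpha> * (t - t0))"
  have Epos: "E > 0" by (simp add: E_def)
  have b1: "s * (E * q t) \<le> D * (E - 1) / \<alpha>" if "s = 1 \<or> s = -1" for s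
    using hmono[OF that] ht0 unfolding h_def E_def by simp
  have "\<bar>E * q t\<bar> \<le> D * (E - 1) / \<alpha>" using b1[of 1] b1[of "-1"] by (simp add: abs_le_iff)
  also have "\<dots> \<le> D * E / \<alpha>"
  proof -
    have "D \<ge> 0" using D[of t0] t0 by (meson abs_ge_zero order.trans order_refl)
    then show ?thesis using \<alpha> by (simp add: divide_right_mono mult_left_mono)
  qed
  finally have "E * \<bar>q t\<bar> \<le> E * (D / \<alpha>)" using Epos by (simp add: abs_mult mult.commute)
  then have qb: "\<bar>q t\<bar> \<le> D / \<alpha>" using Epos by (metis mult_left_le_imp_le times_divide_eq_right)
  have "\<bar>x t - x t0 * exp (- \<alpha> * (t - t0))\<bar> = \<bar>(w t - w t0) - \<alpha> * q t\<bar>" using key[of t] t0 by simp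
  also have "\<dots> \<le> \<bar>w t - w t0\<bar> + \<alpha> * \<bar>q t\<bar>" using \<alpha> abs_triangle_ineq4[of "w t - w t0" "\<alpha> * q t"] by (simp add: abs_mult)
  also have "\<dots> \<le> D + \<alpha> * (D / \<alpha>)" using D[of t] t0 qb \<alpha> by (intro add_mono mult_left_mono) auto
  also have "\<dots> = 2 * D" using \<alpha> by simp
  finally show ?thesis .
qed

lemma ou_blocks:
  fixes x w :: "real \<Rightarrow> real"
  assumes \<alpha>: "\<alpha> > 0" and cx: "continuous_on {0..} x"
    and eq: "\<And>t. t \<ge> 0 \<Longrightarrow> x t = w t - \<alpha> * integral {0..t} x"
    and t0: "0 \<le> t0" and c0: "c \<ge> 0"
    and S: "\<And>i r. i < N \<Longrightarrow> t0 + real i / \<alpha> \<le> r \<Longrightarrow> r \<le> t0 + real i / \<alpha> + 1 / \<alpha> \<Longrightarrow>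
              \<bar>w r - w (t0 + real i / \<alpha>)\<bar> \<le> c"
    and t: "t0 \<le> t" "t \<le> t0 + real N / \<alpha>"
  shows "\<bar>x t\<bar> \<le> \<bar>x t0\<bar> + 6 * c"
proof -
  define a where "a i = t0 + real i / \<alpha>" for i :: nat
  have a0: "a 0 = t0" by (simp add: a_def)
  have aS: "a (Suc i) = a i + 1 / \<alpha>" for i by (simp add: a_def add_divide_distrib)
  have apos: "a i \<ge> 0" for i using t0 \<alpha> by (simp add: a_def)
  have step: "\<bar>x r - x (a i) * exp (- \<alpha> * (r - a i))\<bar> \<le> 2 * c"
    if "i < N" "a i \<le> r" "r \<le> a i + 1 / \<alpha>" for i r
    by (rule ou_step[OF \<alpha> cx eq apos that(2)]) (use S[OF that(1)] that in \<open>auto simp: a_def\<close>)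
  have e1: "exp (-1::real) \<le> 1/2"
  proof -
    have "exp (1::real) \<ge> 2" using exp_ge_add_one_self[of 1] by simp
    then show ?thesis by (simp add: exp_minus field_simps)
  qed
  have ind: "i \<le> N \<Longrightarrow> \<bar>x (a i)\<bar> \<le> \<bar>x t0\<bar> + 4 * c" for i
  proof (induction i)
    case 0 show ?case using c0 a0 by simp
  next
    case (Suc i)
    then have i: "i < N" by simp
    have ih: "\<bar>x (a i)\<bar> \<le> \<bar>x t0\<bar> + 4 * c" using Suc by simp
    have st: "\<bar>x (a (Suc i)) - x (a i) * exp (- \<alpha> * (a (Suc i) - a i))\<bar> \<le> 2 * c"
      by (rule step[OF i]) (use \<alpha> in \<open>auto simp: aS\<close>)
    have ex: "exp (- \<alpha> * (a (Suc i) - a i)) = exp (-1)" using \<alpha> by (simp add: aS)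
    have "\<bar>x (a (Suc i))\<bar> \<le> \<bar>x (a i)\<bar> * exp (-1) + 2 * c"
      using st abs_triangle_ineq2[of "x (a (Suc i))" "x (a i) * exp (-1)"] unfolding ex by (simp add: abs_mult)
    also have "\<dots> \<le> (\<bar>x t0\<bar> + 4 * c) * exp (-1) + 2 * c"
      by (intro add_mono mult_right_mono ih) (use c0 in auto)
    also have "\<dots> \<le> \<bar>x t0\<bar> + 4 * c"
    proof -
      have "\<bar>x t0\<bar> * exp (-1) \<le> \<bar>x t0\<bar>" by (simp add: mult_left_le)
      moreover have "4 * c * exp (-1) \<le> 2 * c" 
      proof -
        have "4 * c * exp (-1) \<le> 4 * c * (1/2)" by (rule mult_left_mono[OF e1]) (use c0 in simp)
        then show ?thesis by simp
      qed
      ultimately show ?thesis by (simp add: distrib_right)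
    qed
    finally show ?case .
  qed
  show ?thesis
  proof (cases "N = 0")
    case True then have "t = t0" using t by simp
    then show ?thesis using c0 by simp
  next
    case False
    define f where "f = (t - t0) * \<alpha>"
    have f0: "0 \<le> f" using t \<alpha> by (simp add: f_def)
    have fN: "f \<le> real N" using t \<alpha> by (simp add: f_def field_simps)
    define k where "k = nat \<lfloor>f\<rfloor>"
    have k1: "real k \<le> f" using f0 by (simp add: k_def)
    have k2: "f < real k + 1" using f0 by (simp add: k_def)
    define i where "i = min (N - 1) k"
    have iN: "i < N" using False by (simp add: i_def)
    have ai: "a i \<le> t"
    proof -
      have "real i \<le> f" using k1 by (simp add: i_def)
      then have "real i / \<alpha> \<le> t - t0" using \<alpha> by (simp add: f_def field_simps)
      then show ?thesis by (simp add: a_def)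
    qed
    have ti: "t \<le> a i + 1 / \<alpha>"
    proof (cases "k \<le> N - 1")
      case True
      then have "i = k" by (simp add: i_def)
      then have "f \<le> real i + 1" using k2 by simp
      then have "t - t0 \<le> (real i + 1) / \<alpha>" using \<alpha> by (simp add: f_def field_simps)
      then show ?thesis by (simp add: a_def add_divide_distrib)
    next
      case False
      then have "i = N - 1" by (simp add: i_def)
      then have "real i + 1 = real N" using \<open>N \<noteq> 0\<close> by simp
      then have "f \<le> real i + 1" using fN by simp
      then have "t - t0 \<le> (real i + 1) / \<alpha>" using \<alpha> by (simp add: f_def field_simps)
      then show ?thesis by (simp add: a_def add_divide_distrib)
    qed
    have st: "\<bar>x t - x (a i) * exp (- \<alpha> * (t - a i))\<bar> \<le> 2 * c" by (rule step[OF iN ai ti])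
    have e: "exp (- \<alpha> * (t - a i)) \<le> 1" using ai \<alpha> by simp
    have "\<bar>x t\<bar> \<le> \<bar>x (a i)\<bar> * exp (- \<alpha> * (t - a i)) + 2 * c"
      using st abs_triangle_ineq2[of "x t" "x (a i) * exp (- \<alpha> * (t - a i))"] by (simp add: abs_mult)
    also have "\<dots> \<le> \<bar>x (a i)\<bar> + 2 * c" using e by (simp add: mult_left_le)
    also have "\<dots> \<le> \<bar>x t0\<bar> + 6 * c" using ind[of i] iN by simp
    finally show ?thesis .
  qed
qed

lemma dyadic_below:
  fixes s \<eta> :: real
  assumes "0 \<le> s" "\<eta> > 0"
  shows "\<exists>j p::nat. real j / 2^p \<le> s \<and> s - real j / 2^p < \<eta>"
proof -
  obtain p :: nat where p: "1 / \<eta> < 2^p" using real_arch_pow[of 2 "1/\<eta>"] by auto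
  define j where "j = nat \<lfloor>s * 2^p\<rfloor>"
  have pp: "(0::real) < 2^p" by simp
  have fl: "real j = of_int \<lfloor>s * 2^p\<rfloor>" unfolding j_def using assms by simp
  have j1: "real j \<le> s * 2^p" using fl by linarith
  have j2: "s * 2^p < real j + 1" using fl by linarith
  have "real j / 2^p \<le> s" using j1 pp by (simp add: field_simps)
  moreover have "s - real j / 2^p < \<eta>"
  proof -
    have "s < (real j + 1) / 2^p" using j2 pp by (simp add: field_simps)
    moreover have "1 / 2^p < \<eta>" using p assms pp by (simp add: field_simps)
    ultimately show ?thesis by (simp add: field_simps)
  qed
  ultimately show ?thesis by blast
qed

lemma ereal_le_from_approx:
  fixes y :: ereal
  assumes "\<And>m::nat. ereal (l - 1 / real (Suc m)) \<le> y"
  shows "ereal l \<le> y"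
proof (rule ereal_le_epsilon2)
  fix e :: real assume e: "0 < e"
  obtain m where m: "inverse (real (Suc m)) < e" using reals_Archimedean[OF e] by auto
  have "ereal l \<le> ereal (l - 1 / real (Suc m)) + ereal e" using m by (simp add: field_simps)
  also have "\<dots> \<le> y + ereal e" by (rule add_right_mono[OF assms])
  finally show "ereal l \<le> y + ereal e" .
qed

context
  fixes M :: "'a measure" and F :: "ennreal \<Rightarrow> 'a measure" and W X :: "real \<Rightarrow> 'a \<Rightarrow> real"
    and \<alpha> :: real
  assumes BM: "brownian_motion_wrt M F W" and OUS: "OU_solution M F \<alpha> W X" and \<alpha>: "\<alpha> > 0"
begin

lemma X_cont: "\<omega> \<in> space M \<Longrightarrow> continuous_on {0..} (\<lambda>t. X t \<omega>)"
  using OUS by (simp add: OU_solution_def)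
lemma X_eq: "\<omega> \<in> space M \<Longrightarrow> t \<ge> 0 \<Longrightarrow> X t \<omega> = W t \<omega> - \<alpha> * integral {0..t} (\<lambda>s. X s \<omega>)"
  using OUS by (simp add: OU_solution_def)
lemma X0: "\<omega> \<in> space M \<Longrightarrow> X 0 \<omega> = 0"
  using X_eq[of \<omega> 0] bm_W0[OF BM] by simp
lemma X_measF: "t \<ge> 0 \<Longrightarrow> X t \<in> borel_measurable (F (ennreal t))"
  using OUS by (simp add: OU_solution_def)
lemma X_meas: "t \<ge> 0 \<Longrightarrow> X t \<in> borel_measurable M"
  using X_measF measurable_F_M[OF BM] by blast

lemma dyadic_left:
  assumes \<omega>: "\<omega> \<in> space M" and s: "s \<ge> 0" and a: "\<bar>X s \<omega>\<bar> > a"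
  shows "\<exists>j p::nat. real j / 2^p \<le> s \<and> \<bar>X (real j / 2^p) \<omega>\<bar> > a"
proof -
  have "continuous (at s within {0..}) (\<lambda>t. X t \<omega>)"
    by (rule continuous_on_eq_continuous_within[THEN iffD1, rule_format, OF X_cont[OF \<omega>]]) (use s in simp)
  then have "\<exists>\<eta>>0. \<forall>r\<in>{0..}. dist r s < \<eta> \<longrightarrow> dist (X r \<omega>) (X s \<omega>) < \<bar>X s \<omega>\<bar> - a"
    using a unfolding continuous_within_eps_delta by (metis diff_gt_0_iff_gt)
  then obtain \<eta> where \<eta>: "\<eta> > 0" "\<And>r. r \<ge> 0 \<Longrightarrow> dist r s < \<eta> \<Longrightarrow> dist (X r \<omega>) (X s \<omega>) < \<bar>X s \<omega>\<bar> - a"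
    by auto
  obtain j p where jp: "real j / 2^p \<le> s" "s - real j / 2^p < \<eta>" using dyadic_below[OF s \<eta>(1)] by auto
  have "dist (X (real j / 2^p) \<omega>) (X s \<omega>) < \<bar>X s \<omega>\<bar> - a"
    by (rule \<eta>(2)) (use jp in \<open>auto simp: dist_real_def\<close>)
  then have "\<bar>X (real j / 2^p) \<omega>\<bar> > a" unfolding dist_real_def by linarith
  then show ?thesis using jp by blast
qed

lemma run_max_char:
  assumes \<omega>: "\<omega> \<in> space M"
  shows "ereal l \<le> run_max X \<tau> \<omega> \<longleftrightarrow>
    (\<forall>m::nat. \<exists>j p::nat. ennreal (real j / 2^p) \<le> \<tau> \<omega> \<and> \<bar>X (real j / 2^p) \<omega>\<bar> > l - 1 / real (Suc m))"
proof
  assume H: "ereal l \<le> run_max X \<tau> \<omega>"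
  show "\<forall>m::nat. \<exists>j p::nat. ennreal (real j / 2^p) \<le> \<tau> \<omega> \<and> \<bar>X (real j / 2^p) \<omega>\<bar> > l - 1 / real (Suc m)"
  proof
    fix m :: nat
    have "ereal (l - 1 / real (Suc m)) < run_max X \<tau> \<omega>" using H
      by (rule less_le_trans[rotated]) simp
    then obtain s where s: "0 \<le> s" "ennreal s \<le> \<tau> \<omega>" "ereal (l - 1 / real (Suc m)) < ereal \<bar>X s \<omega>\<bar>"
      unfolding run_max_def less_SUP_iff by auto
    have s3: "l - 1 / real (Suc m) < \<bar>X s \<omega>\<bar>" using s(3) by simp
    obtain j p where jp: "real j / 2^p \<le> s" "\<bar>X (real j / 2^p) \<omega>\<bar> > l - 1 / real (Suc m)"
      using dyadic_left[OF \<omega> s(1) s3] by blast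
    have "ennreal (real j / 2^p) \<le> ennreal s" using jp(1) by (rule ennreal_leI)
    then show "\<exists>j p::nat. ennreal (real j / 2^p) \<le> \<tau> \<omega> \<and> \<bar>X (real j / 2^p) \<omega>\<bar> > l - 1 / real (Suc m)"
      using s(2) jp(2) order.trans by blast
  qed
next
  assume H: "\<forall>m::nat. \<exists>j p::nat. ennreal (real j / 2^p) \<le> \<tau> \<omega> \<and> \<bar>X (real j / 2^p) \<omega>\<bar> > l - 1 / real (Suc m)"
  show "ereal l \<le> run_max X \<tau> \<omega>"
  proof (rule ereal_le_from_approx)
    fix m :: nat
    obtain j p where jp: "ennreal (real j / 2^p) \<le> \<tau> \<omega>" "\<bar>X (real j / 2^p) \<omega>\<bar> > l - 1 / real (Suc m)"
      using H by blast
    have "ereal (l - 1 / real (Suc m)) \<le> ereal \<bar>X (real j / 2^p) \<omega>\<bar>" using jp(2) by simp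
    also have "\<dots> \<le> run_max X \<tau> \<omega>" unfolding run_max_def
      by (rule SUP_upper) (use jp(1) in auto)
    finally show "ereal (l - 1 / real (Suc m)) \<le> run_max X \<tau> \<omega>" .
  qed
qed

lemma run_max_sets:
  assumes \<tau>: "\<tau> \<in> borel_measurable M"
  shows "{\<omega>\<in>space M. ereal l \<le> run_max X \<tau> \<omega>} \<in> sets M"
proof -
  have S1: "{\<omega>\<in>space M. ennreal (real j / 2^p) \<le> \<tau> \<omega>} \<in> sets M" for j p :: nat
  proof -
    have "{\<omega>\<in>space M. ennreal (real j / 2^p) \<le> \<tau> \<omega>} = \<tau> -` {ennreal (real j / 2^p)..} \<inter> space M" by auto
    also have "\<dots> \<in> sets M" by (rule measurable_sets[OF \<tau>]) simp
    finally show ?thesis .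
  qed
  have S2: "{\<omega>\<in>space M. \<bar>X (real j / 2^p) \<omega>\<bar> > r} \<in> sets M" for j p :: nat and r
  proof -
    have m: "(\<lambda>\<omega>. \<bar>X (real j / 2^p) \<omega>\<bar>) \<in> borel_measurable M"
      by (rule borel_measurable_abs, rule X_meas) simp
    have "{\<omega>\<in>space M. \<bar>X (real j / 2^p) \<omega>\<bar> > r} = (\<lambda>\<omega>. \<bar>X (real j / 2^p) \<omega>\<bar>) -` {r<..} \<inter> space M" by auto
    also have "\<dots> \<in> sets M" by (rule measurable_sets[OF m]) simp
    finally show ?thesis .
  qed
  have "{\<omega>\<in>space M. ereal l \<le> run_max X \<tau> \<omega>} =
    {\<omega>\<in>space M. \<forall>m::nat. \<exists>j p::nat. ennreal (real j / 2^p) \<le> \<tau> \<omega> \<and> \<bar>X (real j / 2^p) \<omega>\<bar> > l - 1 / real (Suc m)}"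
    by (rule Collect_cong, rule conj_cong, rule refl, rule run_max_char, assumption)
  also have "\<dots> = (\<Inter>m\<in>UNIV. \<Union>j\<in>UNIV. \<Union>p\<in>UNIV. {\<omega>\<in>space M. ennreal (real j / 2^p) \<le> \<tau> \<omega>} \<inter>
                  {\<omega>\<in>space M. \<bar>X (real j / 2^p) \<omega>\<bar> > l - 1 / real (Suc m)})"
    by blast
  also have "\<dots> \<in> sets M"
    by (intro sets.countable_INT sets.countable_UN sets.Int S1 S2 image_subsetI) auto
  finally show ?thesis .
qed

end

lemma grid_path:
  fixes x :: "real \<Rightarrow> real" and l T :: real and n j0 p0 :: nat
  assumes x0: "x 0 = 0" and l: "l > 0"
    and osc: "\<And>j p j' p'. real j / 2^p \<le> T + 1 \<Longrightarrow> real j' / 2^p' \<le> T + 1 \<Longrightarrow>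
               \<bar>real j / 2^p - real j' / 2^p'\<bar> \<le> 1 / 2^n \<Longrightarrow> \<bar>x (real j / 2^p) - x (real j' / 2^p')\<bar> \<le> l / 8"
    and qT: "real j0 / 2^p0 < T" and qx: "\<bar>x (real j0 / 2^p0)\<bar> > 3 * l / 2"
  shows "\<exists>k. real (Suc k) / 2^n < real j0 / 2^p0 \<and> (\<forall>j\<le>k. \<bar>x (real j / 2^n)\<bar> < l)
            \<and> l \<le> \<bar>x (real (Suc k) / 2^n)\<bar> \<and> \<bar>x (real (Suc k) / 2^n)\<bar> < 9 * l / 8"
proof -
  define q where "q = real j0 / 2^p0"
  have q0: "q \<ge> 0" by (simp add: q_def)
  define h :: real where "h = 1 / 2^n"
  have h0: "h > 0" by (simp add: h_def)
  have h1: "h \<le> 1" by (simp add: h_def)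
  have dyh: "real j / 2^n = real j * h" for j by (simp add: h_def)
  define j1 where "j1 = nat \<lceil>q * 2^n\<rceil>"
  have pp: "(0::real) < 2^n" by simp
  have fl: "real j1 = of_int \<lceil>q * 2^n\<rceil>" unfolding j1_def using q0 by simp
  have j1a: "q \<le> real j1 / 2^n"
  proof -
    have "q * 2^n \<le> real j1" using fl by linarith
    then show ?thesis using pp by (simp add: field_simps)
  qed
  have j1b: "real j1 / 2^n < q + h"
  proof -
    have "real j1 < q * 2^n + 1" using fl by linarith
    then show ?thesis using pp by (simp add: field_simps h_def)
  qed
  have oscq: "\<bar>x (real j / 2^n) - x q\<bar> \<le> l / 8" if "real j / 2^n \<le> T + 1" "\<bar>real j / 2^n - q\<bar> \<le> h" for j
    using osc[of j n j0 p0] that qT unfolding q_def h_def by simp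
  have P1: "l \<le> \<bar>x (real j1 / 2^n)\<bar>"
  proof -
    have "\<bar>x (real j1 / 2^n) - x q\<bar> \<le> l / 8"
      by (rule oscq) (use j1a j1b h1 qT q_def in auto)
    then show ?thesis using qx l unfolding q_def by linarith
  qed
  define J where "J = (LEAST j. l \<le> \<bar>x (real j / 2^n)\<bar>)"
  have PJ: "l \<le> \<bar>x (real J / 2^n)\<bar>" unfolding J_def by (rule LeastI[of _ j1]) (fact P1)
  have Jle: "J \<le> j1" unfolding J_def by (rule Least_le) (fact P1)
  have notP: "\<bar>x (real j / 2^n)\<bar> < l" if "j < J" for j
    using not_less_Least[of j "\<lambda>j. l \<le> \<bar>x (real j / 2^n)\<bar>"] that unfolding J_def by simp
  have "J \<noteq> 0" proof assume "J = 0" then show False using PJ x0 l by simp qed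
  then obtain k where k: "J = Suc k" by (cases J) auto
  have below: "\<forall>j\<le>k. \<bar>x (real j / 2^n)\<bar> < l" using notP k by auto
  have kq: "real k / 2^n < q"
  proof (rule ccontr)
    assume "\<not> real k / 2^n < q"
    then have "q \<le> real k / 2^n" by simp
    then have "real j1 / 2^n < real k / 2^n + h" using j1b by simp
    also have "\<dots> = real (Suc k) / 2^n" by (simp add: h_def add_divide_distrib)
    finally have "j1 < Suc k" using pp by (simp add: divide_less_cancel)
    then have "\<bar>x (real j1 / 2^n)\<bar> < l" using below by simp
    then show False using P1 by simp
  qed
  have kT: "real k / 2^n \<le> T + 1" using kq qT q_def by simp
  have skq: "real (Suc k) / 2^n = real k / 2^n + h" by (simp add: h_def add_divide_distrib)
  have Skq: "real (Suc k) / 2^n < q"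
  proof (rule ccontr)
    assume "\<not> real (Suc k) / 2^n < q"
    then have "q \<le> real k / 2^n + h" using skq by simp
    then have "\<bar>x (real k / 2^n) - x q\<bar> \<le> l / 8"
      by (intro oscq kT) (use kq in auto)
    moreover have "\<bar>x (real k / 2^n)\<bar> < l" using below by simp
    ultimately show False using qx l unfolding q_def by linarith
  qed
  have "\<bar>x (real (Suc k) / 2^n) - x (real k / 2^n)\<bar> \<le> l / 8"
    by (rule osc) (use Skq qT q_def kT skq in \<open>auto simp: h_def\<close>)
  then have "\<bar>x (real (Suc k) / 2^n)\<bar> < 9 * l / 8" using below[rule_format, of k] by linarith
  then show ?thesis using PJ k below Skq unfolding q_def by auto
qed

context
  fixes M :: "'a measure" and F :: "ennreal \<Rightarrow> 'a measure" and W X :: "real \<Rightarrow> 'a \<Rightarrow> real"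
    and \<alpha> :: real
  assumes BM: "brownian_motion_wrt M F W" and OUS: "OU_solution M F \<alpha> W X" and \<alpha>: "\<alpha> > 0"
begin

lemma core:
  fixes \<tau> :: "'a \<Rightarrow> ennreal" and E :: "real \<Rightarrow> 'a set"
  assumes \<tau>: "stopping_time F \<tau>" and l: "l > 0" and T: "T > 0" and p: "p \<ge> 0"
    and Esets: "\<And>s. s \<ge> 0 \<Longrightarrow> E s \<in> sets M"
    and Epath: "\<And>s \<omega> t. s \<ge> 0 \<Longrightarrow> \<omega> \<in> space M \<Longrightarrow> \<omega> \<notin> E s \<Longrightarrow> s \<le> t \<Longrightarrow> t \<le> s + T \<Longrightarrow>
                  \<bar>X t \<omega>\<bar> \<le> \<bar>X s \<omega>\<bar> + 3 * l / 8"
    and Eprob: "\<And>s G. s \<ge> 0 \<Longrightarrow> G \<in> sets (F (ennreal s)) \<Longrightarrow> measure M (G \<inter> E s) \<le> p * measure M G"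
    and A0: "A0 \<subseteq> {\<omega>\<in>space M. \<tau> \<omega> < ennreal T \<and> (\<exists>s. 0 \<le> s \<and> ennreal s \<le> \<tau> \<omega> \<and> \<bar>X s \<omega>\<bar> > 3 * l / 2)}"
  shows "measure M A0 \<le> p * measure M {\<omega>\<in>space M. ereal l \<le> run_max X \<tau> \<omega>}"
proof -
  interpret prob_space M by (rule bm_prob[OF BM])
  have fm: "finite_measure M" by unfold_locales
  have \<tau>m: "\<tau> \<in> borel_measurable M"
    by (rule measurable_stopping_time[OF \<tau>]) (use bm_sub[OF BM] bm_space[OF BM] in auto)
  define dy where "dy j p = real j / (2::real)^p" for j p :: nat
  have dy0: "dy j p \<ge> 0" for j p by (simp add: dy_def)
  have Xdm: "X (dy j p) \<in> borel_measurable M" for j p by (rule X_meas[OF BM OUS \<alpha>]) (simp add: dy0)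
  define R where "R = {\<omega>\<in>space M. ereal l \<le> run_max X \<tau> \<omega>}"
  have Rs: "R \<in> sets M" unfolding R_def by (rule run_max_sets[OF BM OUS \<alpha> \<tau>m])
  define B0 where "B0 = {\<omega>\<in>space M. \<tau> \<omega> < ennreal T \<and> (\<exists>j p. ennreal (dy j p) \<le> \<tau> \<omega> \<and> \<bar>X (dy j p) \<omega>\<bar> > 3 * l / 2)}"
  define U where "U m = {\<omega>\<in>space M. \<forall>j p j' p'. dy j p \<le> T + 1 \<longrightarrow> dy j' p' \<le> T + 1 \<longrightarrow>
       \<bar>dy j p - dy j' p'\<bar> \<le> 1 / 2^m \<longrightarrow> \<bar>X (dy j p) \<omega> - X (dy j' p') \<omega>\<bar> \<le> l / 8}" for m :: nat
  define G where "G n k = {\<omega>\<in>space M. (\<forall>j\<le>k. \<bar>X (dy j n) \<omega>\<bar> < l) \<and> l \<le> \<bar>X (dy (Suc k) n) \<omega>\<bar>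
       \<and> ennreal (dy k n) < \<tau> \<omega>}" for n k :: nat
  define K where "K n = nat \<lceil>T * 2^n\<rceil>" for n :: nat
  define D where "D n = (\<Union>k<K n. G n k)" for n
  define Dt where "Dt n = (\<Union>n'\<in>{n..}. D n')" for n

  have B0s: "B0 \<in> sets M"
  proof -
    have S1: "{\<omega>\<in>space M. ennreal (dy j p) \<le> \<tau> \<omega>} \<in> sets M" for j p
    proof -
      have "{\<omega>\<in>space M. ennreal (dy j p) \<le> \<tau> \<omega>} = \<tau> -` {ennreal (dy j p)..} \<inter> space M" by auto
      also have "\<dots> \<in> sets M" by (rule measurable_sets[OF \<tau>m]) simp
      finally show ?thesis .
    qed
    have S2: "{\<omega>\<in>space M. \<bar>X (dy j p) \<omega>\<bar> > r} \<in> sets M" for j p r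
    proof -
      have m: "(\<lambda>\<omega>. \<bar>X (dy j p) \<omega>\<bar>) \<in> borel_measurable M" by (rule borel_measurable_abs, rule Xdm)
      have "{\<omega>\<in>space M. \<bar>X (dy j p) \<omega>\<bar> > r} = (\<lambda>\<omega>. \<bar>X (dy j p) \<omega>\<bar>) -` {r<..} \<inter> space M" by auto
      also have "\<dots> \<in> sets M" by (rule measurable_sets[OF m]) simp
      finally show ?thesis .
    qed
    have S3: "{\<omega>\<in>space M. \<tau> \<omega> < ennreal T} \<in> sets M"
    proof -
      have "{\<omega>\<in>space M. \<tau> \<omega> < ennreal T} = \<tau> -` {..<ennreal T} \<inter> space M" by auto
      also have "\<dots> \<in> sets M" by (rule measurable_sets[OF \<tau>m]) simp
      finally show ?thesis .
    qed
    have "B0 = {\<omega>\<in>space M. \<tau> \<omega> < ennreal T} \<inter> (\<Union>j\<in>UNIV. \<Union>p\<in>UNIV.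
        {\<omega>\<in>space M. ennreal (dy j p) \<le> \<tau> \<omega>} \<inter> {\<omega>\<in>space M. \<bar>X (dy j p) \<omega>\<bar> > 3 * l / 2})"
      unfolding B0_def by blast
    also have "\<dots> \<in> sets M"
      by (intro sets.Int S3 sets.countable_UN S1 S2 image_subsetI)
    finally show ?thesis .
  qed
  have Us: "U m \<in> sets M" for m
  proof -
    have S: "{\<omega>\<in>space M. P \<longrightarrow> \<bar>X (dy j p) \<omega> - X (dy j' p') \<omega>\<bar> \<le> l / 8} \<in> sets M" for P j p j' p'
    proof (cases P)
      case True
      have m: "(\<lambda>\<omega>. \<bar>X (dy j p) \<omega> - X (dy j' p') \<omega>\<bar>) \<in> borel_measurable M"
        by (intro borel_measurable_abs borel_measurable_diff Xdm)
      have "{\<omega>\<in>space M. P \<longrightarrow> \<bar>X (dy j p) \<omega> - X (dy j' p') \<omega>\<bar> \<le> l / 8}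
          = (\<lambda>\<omega>. \<bar>X (dy j p) \<omega> - X (dy j' p') \<omega>\<bar>) -` {..l/8} \<inter> space M" using True by auto
      also have "\<dots> \<in> sets M" by (rule measurable_sets[OF m]) simp
      finally show ?thesis .
    next
      case False then show ?thesis by simp
    qed
    have "U m = (\<Inter>j\<in>UNIV. \<Inter>p\<in>UNIV. \<Inter>j'\<in>UNIV. \<Inter>p'\<in>UNIV.
       {\<omega>\<in>space M. (dy j p \<le> T + 1 \<and> dy j' p' \<le> T + 1 \<and> \<bar>dy j p - dy j' p'\<bar> \<le> 1 / 2^m) \<longrightarrow>
          \<bar>X (dy j p) \<omega> - X (dy j' p') \<omega>\<bar> \<le> l / 8})"
      unfolding U_def by auto
    also have "\<dots> \<in> sets M"
      by (intro sets.countable_INT S image_subsetI) auto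
    finally show ?thesis .
  qed
  have GF: "G n k \<in> sets (F (ennreal (dy (Suc k) n)))" for n k
  proof -
    define t where "t = ennreal (dy (Suc k) n)"
    have XF: "X (dy j n) \<in> borel_measurable (F t)" if "j \<le> Suc k" for j
    proof (rule measurable_F_mono[OF BM X_measF[OF BM OUS \<alpha> dy0]])
      show "ennreal (dy j n) \<le> t" unfolding t_def dy_def using that
        by (intro ennreal_leI divide_right_mono) auto
    qed
    have sp: "space (F t) = space M" by (rule bm_space[OF BM])
    have S1: "{\<omega>\<in>space M. \<bar>X (dy j n) \<omega>\<bar> < l} \<in> sets (F t)" if "j \<le> Suc k" for j
    proof -
      have m: "(\<lambda>\<omega>. \<bar>X (dy j n) \<omega>\<bar>) \<in> borel_measurable (F t)" by (rule borel_measurable_abs, rule XF[OF that])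
      have "{\<omega>\<in>space M. \<bar>X (dy j n) \<omega>\<bar> < l} = (\<lambda>\<omega>. \<bar>X (dy j n) \<omega>\<bar>) -` {..<l} \<inter> space (F t)" using sp by auto
      also have "\<dots> \<in> sets (F t)" by (rule measurable_sets[OF m]) simp
      finally show ?thesis .
    qed
    have S2: "{\<omega>\<in>space M. l \<le> \<bar>X (dy (Suc k) n) \<omega>\<bar>} \<in> sets (F t)"
    proof -
      have m: "(\<lambda>\<omega>. \<bar>X (dy (Suc k) n) \<omega>\<bar>) \<in> borel_measurable (F t)" by (rule borel_measurable_abs, rule XF) simp
      have "{\<omega>\<in>space M. l \<le> \<bar>X (dy (Suc k) n) \<omega>\<bar>} = (\<lambda>\<omega>. \<bar>X (dy (Suc k) n) \<omega>\<bar>) -` {l..} \<inter> space (F t)" using sp by auto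
      also have "\<dots> \<in> sets (F t)" by (rule measurable_sets[OF m]) simp
      finally show ?thesis .
    qed
    have S3: "{\<omega>\<in>space M. ennreal (dy k n) < \<tau> \<omega>} \<in> sets (F t)"
    proof -
      have "{\<omega>\<in>space (F (ennreal (dy k n))). ennreal (dy k n) < \<tau> \<omega>} \<in> sets (F (ennreal (dy k n)))"
        using stopping_timeD2[OF \<tau>, of "ennreal (dy k n)"] unfolding Measurable.pred_def by simp
      moreover have "sets (F (ennreal (dy k n))) \<subseteq> sets (F t)"
        by (rule bm_mono[OF BM]) (unfold t_def dy_def, intro ennreal_leI divide_right_mono, auto)
      ultimately show ?thesis using bm_space[OF BM] by auto
    qed
    have "G n k = (\<Inter>j\<in>{..k}. {\<omega>\<in>space M. \<bar>X (dy j n) \<omega>\<bar> < l}) \<inter>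
        {\<omega>\<in>space M. l \<le> \<bar>X (dy (Suc k) n) \<omega>\<bar>} \<inter> {\<omega>\<in>space M. ennreal (dy k n) < \<tau> \<omega>}"
      unfolding G_def by auto
    also have "\<dots> \<in> sets (F t)"
      by (intro sets.Int S2 S3 sets.finite_INT S1) auto
    finally show ?thesis unfolding t_def .
  qed
  have Gs: "G n k \<in> sets M" for n k using GF bm_sub[OF BM] by blast
  have Ds: "D n \<in> sets M" for n unfolding D_def using Gs by blast
  have Dts: "Dt n \<in> sets M" for n unfolding Dt_def using Ds by blast
  have Gdisj: "disjoint_family_on (G n) {..<K n}" for n
  proof -
    have "G n k \<inter> G n k' = {}" if "k < k'" for k k'
      using that unfolding G_def by (auto simp: not_less_eq_eq[symmetric] Suc_le_eq) (meson Suc_leI not_less)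
    then show ?thesis unfolding disjoint_family_on_def
      by (metis Int_commute linorder_neqE_nat)
  qed

  have path: "\<exists>k<K n. \<omega> \<in> G n k \<inter> E (dy (Suc k) n)" if \<omega>: "\<omega> \<in> B0 \<inter> U m" and mn: "m \<le> n" for \<omega> m n
  proof -
    have \<omega>M: "\<omega> \<in> space M" using \<omega> unfolding B0_def by auto
    obtain j0 p0 where jp0: "ennreal (dy j0 p0) \<le> \<tau> \<omega>" "\<bar>X (dy j0 p0) \<omega>\<bar> > 3 * l / 2"
      and \<tau>T: "\<tau> \<omega> < ennreal T" using \<omega> unfolding B0_def by auto
    have "ennreal (dy j0 p0) < ennreal T" using jp0(1) \<tau>T by (rule le_less_trans)
    then have qT: "dy j0 p0 < T" using dy0 by (simp add: ennreal_less_iff)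
    have hmn: "(1::real) / 2^n \<le> 1 / 2^m" using mn by (simp add: field_simps power_increasing)
    have osc: "\<bar>X (real j / 2^p) \<omega> - X (real j' / 2^p') \<omega>\<bar> \<le> l / 8"
      if "real j / 2^p \<le> T + 1" "real j' / 2^p' \<le> T + 1" "\<bar>real j / 2^p - real j' / 2^p'\<bar> \<le> 1 / 2^n" for j p j' p'
      using \<omega> that hmn unfolding U_def dy_def by auto
    obtain k where k: "real (Suc k) / 2^n < real j0 / 2^p0" "\<forall>j\<le>k. \<bar>X (real j / 2^n) \<omega>\<bar> < l"
        "l \<le> \<bar>X (real (Suc k) / 2^n) \<omega>\<bar>" "\<bar>X (real (Suc k) / 2^n) \<omega>\<bar> < 9 * l / 8"
      using grid_path[of "\<lambda>t. X t \<omega>" l T n j0 p0, OF X0[OF BM OUS \<alpha> \<omega>M] l osc] qT jp0(2) unfolding dy_def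
      by blast
    have kk: "dy k n < dy (Suc k) n" by (simp add: dy_def divide_strict_right_mono)
    have kK: "k < K n"
    proof -
      have "dy k n < T" using kk k(1) qT unfolding dy_def by linarith
      then have "real k < T * 2^n" by (simp add: dy_def field_simps)
      then have "real k < of_int \<lceil>T * 2^n\<rceil>" by linarith
      then show ?thesis unfolding K_def by linarith
    qed
    have tk: "ennreal (dy k n) < \<tau> \<omega>"
    proof -
      have "dy k n < dy j0 p0" using kk k(1) unfolding dy_def by linarith
      then have "ennreal (dy k n) < ennreal (dy j0 p0)" using dy0 by (simp add: ennreal_less_iff)
      then show ?thesis using jp0(1) by (rule less_le_trans)
    qed
    have G: "\<omega> \<in> G n k" unfolding G_def using \<omega>M k(2,3) tk unfolding dy_def by auto
    have "\<omega> \<in> E (dy (Suc k) n)"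
    proof (rule ccontr)
      assume nE: "\<omega> \<notin> E (dy (Suc k) n)"
      have q1: "dy (Suc k) n \<le> dy j0 p0" using k(1) unfolding dy_def by linarith
      have q2: "dy j0 p0 \<le> dy (Suc k) n + T" using qT dy0[of "Suc k" n] by linarith
      have "\<bar>X (dy j0 p0) \<omega>\<bar> \<le> \<bar>X (dy (Suc k) n) \<omega>\<bar> + 3 * l / 8"
        by (rule Epath[OF dy0 \<omega>M nE q1 q2])
      then show False using k(4) jp0(2) unfolding dy_def by linarith
    qed
    then show ?thesis using G kK by blast
  qed

  have step: "measure M (B0 \<inter> U m) \<le> p * measure M (Dt n)" if mn: "m \<le> n" for m n
  proof -
    have sub: "B0 \<inter> U m \<subseteq> (\<Union>k<K n. G n k \<inter> E (dy (Suc k) n))" using path[OF _ mn] by blast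
    have "measure M (B0 \<inter> U m) \<le> measure M (\<Union>k<K n. G n k \<inter> E (dy (Suc k) n))"
      by (rule finite_measure_mono[OF sub]) (use Gs Esets dy0 in blast)
    also have "\<dots> \<le> (\<Sum>k<K n. measure M (G n k \<inter> E (dy (Suc k) n)))"
      by (rule finite_measure_subadditive_finite) (use Gs Esets dy0 in blast)+
    also have "\<dots> \<le> (\<Sum>k<K n. p * measure M (G n k))"
      by (rule sum_mono, rule Eprob[OF dy0 GF])
    also have "\<dots> = p * measure M (D n)"
      unfolding D_def sum_distrib_left[symmetric]
      by (subst finite_measure_finite_Union) (use Gs Gdisj in auto)
    also have "\<dots> \<le> p * measure M (Dt n)"
      by (rule mult_left_mono[OF finite_measure_mono p]) (use Dts in \<open>auto simp: Dt_def\<close>)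
    finally show ?thesis .
  qed
  have Dtdec: "decseq Dt" unfolding decseq_def Dt_def by (auto, meson atLeast_iff order.trans)
  have Dtlim: "(\<lambda>n. measure M (Dt n)) \<longlonglongrightarrow> measure M (\<Inter>n. Dt n)"
    by (rule finite_Lim_measure_decseq) (use Dts Dtdec in auto)
  have DtR: "(\<Inter>n. Dt n) \<subseteq> R"
  proof
    fix \<omega> assume \<omega>: "\<omega> \<in> (\<Inter>n. Dt n)"
    have hit: "\<exists>n'\<ge>n. \<exists>k. \<omega> \<in> G n' k" for n
      using \<omega> unfolding Dt_def D_def by blast
    obtain n0 k0 where "\<omega> \<in> G n0 k0" using hit[of 0] by blast
    then have \<omega>M: "\<omega> \<in> space M" and l0: "l \<le> \<bar>X (dy (Suc k0) n0) \<omega>\<bar>" unfolding G_def by auto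
    have "ereal l \<le> run_max X \<tau> \<omega>"
    proof (cases "\<tau> \<omega>")
      case top
      have "ereal l \<le> ereal \<bar>X (dy (Suc k0) n0) \<omega>\<bar>" using l0 by simp
      also have "\<dots> \<le> run_max X \<tau> \<omega>" unfolding run_max_def
        by (rule SUP_upper) (use top dy0 in auto)
      finally show ?thesis .
    next
      case (real r)
      define S where "S = {t. 0 \<le> t \<and> l \<le> \<bar>X t \<omega>\<bar>}"
      have Seq: "S = {0..} \<inter> (\<lambda>t. \<bar>X t \<omega>\<bar>) -` {l..}" unfolding S_def by auto
      have cS: "closed S" unfolding Seq
        by (rule continuous_closed_preimage) (use X_cont[OF BM OUS \<alpha> \<omega>M] in \<open>auto intro!: continuous_intros\<close>)
      have neS: "S \<noteq> {}" using l0 dy0 unfolding S_def by auto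
      have bS: "bdd_below S" unfolding S_def by (rule bdd_belowI[of _ 0]) auto
      define \<sigma> where "\<sigma> = Inf S"
      have \<sigma>S: "\<sigma> \<in> S" unfolding \<sigma>_def by (rule closed_contains_Inf[OF neS bS cS])
      have \<sigma>r: "\<sigma> \<le> r"
      proof (rule ccontr)
        assume "\<not> \<sigma> \<le> r"
        then have "\<sigma> - r > 0" by simp
        then obtain n where n: "(1/2::real)^n < \<sigma> - r" using real_arch_pow_inv[of "\<sigma> - r" "1/2"] by auto
        obtain n' k where n': "n' \<ge> n" "\<omega> \<in> G n' k" using hit[of n] by blast
        have "ennreal (dy k n') < ennreal r" using n'(2) real unfolding G_def by auto
        then have kr: "dy k n' < r" using dy0 by (simp add: ennreal_less_iff)
        have "dy (Suc k) n' = dy k n' + (1/2)^n'" by (simp add: dy_def add_divide_distrib power_one_over)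
        also have "(1/2::real)^n' \<le> (1/2)^n" using n'(1) by (simp add: power_decreasing)
        then have "dy k n' + (1/2)^n' < r + (\<sigma> - r)" using kr n by linarith
        finally have lt: "dy (Suc k) n' < \<sigma>" by simp
        have "dy (Suc k) n' \<in> S" using n'(2) dy0 unfolding G_def S_def by auto
        then have "\<sigma> \<le> dy (Suc k) n'" unfolding \<sigma>_def by (rule cInf_lower[OF _ bS])
        then show False using lt by simp
      qed
      have "ereal l \<le> ereal \<bar>X \<sigma> \<omega>\<bar>" using \<sigma>S unfolding S_def by simp
      also have "\<dots> \<le> run_max X \<tau> \<omega>" unfolding run_max_def
        by (rule SUP_upper) (use \<sigma>S \<sigma>r real in \<open>auto simp: S_def intro: ennreal_leI\<close>)
      finally show ?thesis .
    qed
    then show "\<omega> \<in> R" unfolding R_def using \<omega>M by simp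
  qed
  have stepm: "measure M (B0 \<inter> U m) \<le> p * measure M R" for m
  proof -
    have "(\<lambda>n. p * measure M (Dt n)) \<longlonglongrightarrow> p * measure M (\<Inter>n. Dt n)"
      by (intro tendsto_mult tendsto_const Dtlim)
    then have "measure M (B0 \<inter> U m) \<le> p * measure M (\<Inter>n. Dt n)"
      by (rule LIMSEQ_le_const) (use step in auto)
    also have "\<dots> \<le> p * measure M R"
      by (rule mult_left_mono[OF finite_measure_mono[OF DtR Rs] p])
    finally show ?thesis .
  qed
  have Uinc: "incseq (\<lambda>m. B0 \<inter> U m)"
  proof (rule incseq_SucI)
    fix m :: nat
    have "(1::real) / 2^Suc m \<le> 1 / 2^m" by (simp add: field_simps)
    then show "B0 \<inter> U m \<subseteq> B0 \<inter> U (Suc m)" unfolding U_def by (auto intro: order.trans)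
  qed
  have Ulim: "(\<lambda>m. measure M (B0 \<inter> U m)) \<longlonglongrightarrow> measure M (\<Union>m. B0 \<inter> U m)"
    by (rule finite_Lim_measure_incseq) (use B0s Us Uinc in auto)
  have final: "measure M (\<Union>m. B0 \<inter> U m) \<le> p * measure M R"
    by (rule LIMSEQ_le_const2[OF Ulim]) (use stepm in auto)
  have LHS: "{\<omega>\<in>space M. \<tau> \<omega> < ennreal T \<and> (\<exists>s. 0 \<le> s \<and> ennreal s \<le> \<tau> \<omega> \<and> \<bar>X s \<omega>\<bar> > 3 * l / 2)}
     \<subseteq> (\<Union>m. B0 \<inter> U m)"
  proof
    fix \<omega> assume "\<omega> \<in> {\<omega>\<in>space M. \<tau> \<omega> < ennreal T \<and> (\<exists>s. 0 \<le> s \<and> ennreal s \<le> \<tau> \<omega> \<and> \<bar>X s \<omega>\<bar> > 3 * l / 2)}"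
    then obtain s where \<omega>M: "\<omega> \<in> space M" and \<tau>T: "\<tau> \<omega> < ennreal T"
      and s: "0 \<le> s" "ennreal s \<le> \<tau> \<omega>" "\<bar>X s \<omega>\<bar> > 3 * l / 2" by auto
    obtain j p where jp: "real j / 2^p \<le> s" "\<bar>X (real j / 2^p) \<omega>\<bar> > 3 * l / 2"
      using dyadic_left[OF BM OUS \<alpha> \<omega>M s(1) s(3)] by blast
    have "ennreal (dy j p) \<le> ennreal s" unfolding dy_def using jp(1) by (rule ennreal_leI)
    then have "ennreal (dy j p) \<le> \<tau> \<omega>" using s(2) by (rule order.trans)
    then have B: "\<omega> \<in> B0" unfolding B0_def using \<omega>M \<tau>T jp(2) unfolding dy_def by auto
    have "uniformly_continuous_on {0..T+1} (\<lambda>t. X t \<omega>)"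
      by (rule compact_uniformly_continuous) (use continuous_on_subset[OF X_cont[OF BM OUS \<alpha> \<omega>M]] in auto)
    then obtain d where d: "d > 0" "\<And>x x'. x \<in> {0..T+1} \<Longrightarrow> x' \<in> {0..T+1} \<Longrightarrow> dist x' x < d \<Longrightarrow>
        dist (X x' \<omega>) (X x \<omega>) < l / 8"
      unfolding uniformly_continuous_on_def using l by (metis divide_pos_pos zero_less_numeral)
    obtain m where m: "(1/2::real)^m < d" using real_arch_pow_inv[of d "1/2"] d(1) by auto
    have "\<omega> \<in> U m" unfolding U_def
    proof (intro CollectI conjI allI impI \<omega>M)
      fix j p j' p' assume a: "dy j p \<le> T + 1" "dy j' p' \<le> T + 1" "\<bar>dy j p - dy j' p'\<bar> \<le> 1 / 2^m"
      have "dist (X (dy j p) \<omega>) (X (dy j' p') \<omega>) < l / 8"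
        by (rule d(2)) (use a dy0 m in \<open>auto simp: dist_real_def power_one_over\<close>)
      then show "\<bar>X (dy j p) \<omega> - X (dy j' p') \<omega>\<bar> \<le> l / 8" by (simp add: dist_real_def)
    qed
    then show "\<omega> \<in> (\<Union>m. B0 \<inter> U m)" using B by blast
  qed
  have "measure M A0 \<le> measure M (\<Union>m. B0 \<inter> U m)"
    by (rule measure_le_superset[OF fm _ order.trans[OF A0 LHS]]) (use B0s Us in blast)
  then show ?thesis using final unfolding R_def by linarith
qed

end

lemma phi_lim:
  fixes \<alpha> :: real assumes "\<alpha> > 0"
  shows "((\<lambda>\<delta>. 4 * exp (- \<alpha> / (8192 * \<delta>^2))) \<longlongrightarrow> 0) (at_right 0)"
  using assms by real_asymp

context
  fixes M :: "'a measure" and F :: "ennreal \<Rightarrow> 'a measure" and W X :: "real \<Rightarrow> 'a \<Rightarrow> real"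
    and \<alpha> :: real
  assumes BM: "brownian_motion_wrt M F W" and OUS: "OU_solution M F \<alpha> W X" and \<alpha>: "\<alpha> > 0"
begin

lemma case1:
  fixes \<tau> :: "'a \<Rightarrow> ennreal"
  assumes \<tau>: "stopping_time F \<tau>" and l: "l > 0" and T: "T > 0"
    and A0: "A0 \<subseteq> {\<omega>\<in>space M. \<tau> \<omega> < ennreal T \<and> (\<exists>s. 0 \<le> s \<and> ennreal s \<le> \<tau> \<omega> \<and> \<bar>X s \<omega>\<bar> > 3 * l / 2)}"
  shows "measure M A0 \<le> 4 * exp (- ((3*l/16)^2) / (8 * T)) * measure M {\<omega>\<in>space M. ereal l \<le> run_max X \<tau> \<omega>}"
proof (rule core[OF BM OUS \<alpha> \<tau> l T _ _ _ _ A0, where E = "\<lambda>s. Ecal M W s T (3*l/16)"])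
  show "0 \<le> 4 * exp (- ((3*l/16)^2) / (8 * T))" by simp
  show "Ecal M W s T (3*l/16) \<in> sets M" if "s \<ge> 0" for s by (rule Ecal_sets[OF BM that T])
  show "measure M (G \<inter> Ecal M W s T (3*l/16)) \<le> 4 * exp (- ((3*l/16)^2) / (8 * T)) * measure M G"
    if "s \<ge> 0" "G \<in> sets (F (ennreal s))" for s G
    using levy_cont[OF BM that(1) T _ that(2), of "3*l/16"] l by (simp add: mult_ac)
  show "\<bar>X t \<omega>\<bar> \<le> \<bar>X s \<omega>\<bar> + 3 * l / 8"
    if s: "s \<ge> 0" and \<omega>: "\<omega> \<in> space M" and nE: "\<omega> \<notin> Ecal M W s T (3*l/16)" and t: "s \<le> t" "t \<le> s + T" for s \<omega> t
  proof -
    have nW: "\<bar>W (s+v) \<omega> - W s \<omega>\<bar> < 3*l/16" if "v \<in> {0..T}" for v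
    proof (rule ccontr)
      assume "\<not> \<bar>W (s+v) \<omega> - W s \<omega>\<bar> < 3*l/16"
      then have "\<omega> \<in> {\<omega>\<in>space M. \<exists>v\<in>{0..T}. \<bar>W (s+v) \<omega> - W s \<omega>\<bar> \<ge> 3*l/16}" using \<omega> that by (intro CollectI conjI bexI[of _ v]) auto
      then have "\<omega> \<in> Ecal M W s T (3*l/16)" using Ecal_sub[OF BM s T, of "3*l/16"] l by auto
      then show False using nE by simp
    qed
    have "\<bar>X t \<omega> - X s \<omega> * exp (- \<alpha> * (t - s))\<bar> \<le> 2 * (3*l/16)"
    proof (rule ou_step[OF \<alpha> X_cont[OF BM OUS \<alpha> \<omega>] X_eq[OF BM OUS \<alpha> \<omega>] s t(1)])
      fix r assume r: "s \<le> r" "r \<le> t"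
      have "\<bar>W (s + (r - s)) \<omega> - W s \<omega>\<bar> < 3*l/16" by (rule nW) (use r t in auto)
      then show "\<bar>W r \<omega> - W s \<omega>\<bar> \<le> 3*l/16" by simp
    qed
    moreover have "exp (- \<alpha> * (t - s)) \<le> 1" using \<alpha> t by simp
    ultimately have "\<bar>X t \<omega>\<bar> \<le> \<bar>X s \<omega>\<bar> * exp (- \<alpha> * (t - s)) + 3 * l / 8"
      using abs_triangle_ineq2[of "X t \<omega>" "X s \<omega> * exp (- \<alpha> * (t - s))"] by (simp add: abs_mult)
    also have "\<dots> \<le> \<bar>X s \<omega>\<bar> + 3 * l / 8" using \<open>exp _ \<le> 1\<close> by (simp add: mult_left_le)
    finally show ?thesis .
  qed
qed

lemma case2:
  fixes \<tau> :: "'a \<Rightarrow> ennreal" and N :: nat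
  assumes \<tau>: "stopping_time F \<tau>" and l: "l > 0" and T: "T > 0" and N: "real N \<ge> \<alpha> * T"
    and A0: "A0 \<subseteq> {\<omega>\<in>space M. \<tau> \<omega> < ennreal T \<and> (\<exists>s. 0 \<le> s \<and> ennreal s \<le> \<tau> \<omega> \<and> \<bar>X s \<omega>\<bar> > 3 * l / 2)}"
  shows "measure M A0 \<le> 4 * real N * exp (- ((l/16)^2) / (8 * (1/\<alpha>))) * measure M {\<omega>\<in>space M. ereal l \<le> run_max X \<tau> \<omega>}"
proof (rule core[OF BM OUS \<alpha> \<tau> l T _ _ _ _ A0, where E = "\<lambda>s. \<Union>i\<in>{..<N}. Ecal M W (s + real i / \<alpha>) (1/\<alpha>) (l/16)"])
  have L: "1 / \<alpha> > 0" using \<alpha> by simp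
  have ai: "s + real i / \<alpha> \<ge> 0" if "s \<ge> 0" for s i using that \<alpha> by simp
  show "0 \<le> 4 * real N * exp (- ((l/16)^2) / (8 * (1/\<alpha>)))" by simp
  show "(\<Union>i\<in>{..<N}. Ecal M W (s + real i / \<alpha>) (1/\<alpha>) (l/16)) \<in> sets M" if "s \<ge> 0" for s
    by (intro sets.finite_UN Ecal_sets[OF BM ai[OF that] L]) auto
  show "measure M (G \<inter> (\<Union>i\<in>{..<N}. Ecal M W (s + real i / \<alpha>) (1/\<alpha>) (l/16)))
      \<le> 4 * real N * exp (- ((l/16)^2) / (8 * (1/\<alpha>))) * measure M G"
    if s: "s \<ge> 0" and G: "G \<in> sets (F (ennreal s))" for s G
  proof -
    interpret prob_space M by (rule bm_prob[OF BM])
    have GM: "G \<in> sets M" using G bm_sub[OF BM] by blast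
    have Gi: "G \<in> sets (F (ennreal (s + real i / \<alpha>)))" for i
    proof -
      have "ennreal s \<le> ennreal (s + real i / \<alpha>)" using \<alpha> by (intro ennreal_leI) simp
      then show ?thesis using G bm_mono[OF BM, of "ennreal s" "ennreal (s + real i / \<alpha>)"] by blast
    qed
    have "measure M (G \<inter> (\<Union>i\<in>{..<N}. Ecal M W (s + real i / \<alpha>) (1/\<alpha>) (l/16)))
        = measure M (\<Union>i\<in>{..<N}. G \<inter> Ecal M W (s + real i / \<alpha>) (1/\<alpha>) (l/16))" by (simp only: Int_UN_distrib)
    also have "\<dots> \<le> (\<Sum>i<N. measure M (G \<inter> Ecal M W (s + real i / \<alpha>) (1/\<alpha>) (l/16)))"
      by (rule finite_measure_subadditive_finite) (simp, intro image_subsetI sets.Int GM Ecal_sets[OF BM ai[OF s] L])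
    also have "\<dots> \<le> (\<Sum>i<N. 4 * measure M G * exp (- ((l/16)^2) / (8 * (1/\<alpha>))))"
      by (rule sum_mono, rule levy_cont[OF BM ai[OF s] L _ Gi]) (use l in simp)
    also have "\<dots> = 4 * real N * exp (- ((l/16)^2) / (8 * (1/\<alpha>))) * measure M G" by simp
    finally show ?thesis .
  qed
  show "\<bar>X t \<omega>\<bar> \<le> \<bar>X s \<omega>\<bar> + 3 * l / 8"
    if s: "s \<ge> 0" and \<omega>: "\<omega> \<in> space M" and nE: "\<omega> \<notin> (\<Union>i\<in>{..<N}. Ecal M W (s + real i / \<alpha>) (1/\<alpha>) (l/16))"
      and t: "s \<le> t" "t \<le> s + T" for s \<omega> t
  proof -
    have S: "\<bar>W r \<omega> - W (s + real i / \<alpha>) \<omega>\<bar> \<le> l/16"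
      if i: "i < N" and r: "s + real i / \<alpha> \<le> r" "r \<le> s + real i / \<alpha> + 1 / \<alpha>" for i r
    proof (rule ccontr)
      define a where "a = s + real i / \<alpha>"
      assume "\<not> \<bar>W r \<omega> - W (s + real i / \<alpha>) \<omega>\<bar> \<le> l/16"
      then have "\<bar>W (a + (r - a)) \<omega> - W a \<omega>\<bar> \<ge> l/16" unfolding a_def by simp
      then have "\<omega> \<in> {\<omega>\<in>space M. \<exists>v\<in>{0..1/\<alpha>}. \<bar>W (a+v) \<omega> - W a \<omega>\<bar> \<ge> l/16}"
        using \<omega> r unfolding a_def by (intro CollectI conjI bexI[of _ "r - a"]) (auto simp: a_def)
      moreover have a0: "a \<ge> 0" unfolding a_def by (rule ai[OF s])
      moreover have "l/16 > 0" using l by simp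
      ultimately have "\<omega> \<in> Ecal M W a (1/\<alpha>) (l/16)" using Ecal_sub[OF BM _ L] by blast
      then show False using nE i unfolding a_def by blast
    qed
    have tN: "t \<le> s + real N / \<alpha>"
    proof -
      have "T \<le> real N / \<alpha>" using N \<alpha> by (simp add: field_simps)
      then show ?thesis using t by simp
    qed
    have "\<bar>X t \<omega>\<bar> \<le> \<bar>X s \<omega>\<bar> + 6 * (l/16)"
      by (rule ou_blocks[OF \<alpha> X_cont[OF BM OUS \<alpha> \<omega>] X_eq[OF BM OUS \<alpha> \<omega>] s _ S t(1) tN]) (use l in auto)
    then show ?thesis by simp
  qed
qed

lemma A_sub:
  fixes \<tau> :: "'a \<Rightarrow> ennreal"
  assumes l: "l > 0" and d: "\<delta> > 0"
  shows "{\<omega>\<in>space M. run_max X \<tau> \<omega> \<ge> ereal (2 * l) \<and> \<tau> \<omega> \<noteq> \<infinity> \<and>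
                      sqrt (ln (1 + \<alpha> * enn2real (\<tau> \<omega>))) < \<delta> * l}
    \<subseteq> {\<omega>\<in>space M. \<tau> \<omega> < ennreal ((exp ((\<delta> * l)^2) - 1) / \<alpha>) \<and>
         (\<exists>s. 0 \<le> s \<and> ennreal s \<le> \<tau> \<omega> \<and> \<bar>X s \<omega>\<bar> > 3 * l / 2)}"
proof
  fix \<omega> assume "\<omega> \<in> {\<omega>\<in>space M. run_max X \<tau> \<omega> \<ge> ereal (2 * l) \<and> \<tau> \<omega> \<noteq> \<infinity> \<and>
                      sqrt (ln (1 + \<alpha> * enn2real (\<tau> \<omega>))) < \<delta> * l}"
  then have \<omega>: "\<omega> \<in> space M" and rm: "run_max X \<tau> \<omega> \<ge> ereal (2 * l)" and fin: "\<tau> \<omega> \<noteq> \<infinity>"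
    and sq: "sqrt (ln (1 + \<alpha> * enn2real (\<tau> \<omega>))) < \<delta> * l" by auto
  obtain r where r: "0 \<le> r" "\<tau> \<omega> = ennreal r" using fin by (cases "\<tau> \<omega>") auto
  have er: "enn2real (\<tau> \<omega>) = r" using r by simp
  have Lpos: "0 \<le> ln (1 + \<alpha> * r)" using r \<alpha> by simp
  have "sqrt (ln (1 + \<alpha> * r)) < sqrt ((\<delta> * l)^2)" using sq er l d by simp
  then have "ln (1 + \<alpha> * r) < (\<delta> * l)^2" by (simp only: real_sqrt_less_iff)
  then have "exp (ln (1 + \<alpha> * r)) < exp ((\<delta> * l)^2)" by simp
  then have "1 + \<alpha> * r < exp ((\<delta> * l)^2)" using r \<alpha> by (simp add: add_pos_nonneg)
  then have "r < (exp ((\<delta> * l)^2) - 1) / \<alpha>" using \<alpha> by (simp add: field_simps)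
  then have T: "\<tau> \<omega> < ennreal ((exp ((\<delta> * l)^2) - 1) / \<alpha>)" using r by (simp add: ennreal_less_iff)
  have "ereal (3 * l / 2) < ereal (2 * l)" using l by simp
  then have "ereal (3 * l / 2) < run_max X \<tau> \<omega>" using rm by (rule less_le_trans)
  then obtain s where "0 \<le> s" "ennreal s \<le> \<tau> \<omega>" "ereal (3 * l / 2) < ereal \<bar>X s \<omega>\<bar>"
    unfolding run_max_def less_SUP_iff by auto
  then show "\<omega> \<in> {\<omega>\<in>space M. \<tau> \<omega> < ennreal ((exp ((\<delta> * l)^2) - 1) / \<alpha>) \<and>
         (\<exists>s. 0 \<le> s \<and> ennreal s \<le> \<tau> \<omega> \<and> \<bar>X s \<omega>\<bar> > 3 * l / 2)}" using \<omega> T by auto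
qed

lemma main_bound:
  fixes \<tau> :: "'a \<Rightarrow> ennreal"
  assumes \<tau>: "stopping_time F \<tau>" and d: "\<delta> > 0" and l: "l > 0"
  shows "measure M {\<omega>\<in>space M. run_max X \<tau> \<omega> \<ge> ereal (2 * l) \<and> \<tau> \<omega> \<noteq> \<infinity> \<and>
                      sqrt (ln (1 + \<alpha> * enn2real (\<tau> \<omega>))) < \<delta> * l}
        \<le> (if \<delta>^2 \<le> \<alpha> / 4096 then 4 * exp (- \<alpha> / (8192 * \<delta>^2)) else 1)
           * measure M {\<omega>\<in>space M. run_max X \<tau> \<omega> \<ge> ereal l}"
    (is "measure M ?A \<le> ?phi * measure M ?R")
proof -
  interpret prob_space M by (rule bm_prob[OF BM])
  have fm: "finite_measure M" by unfold_locales
  have \<tau>m: "\<tau> \<in> borel_measurable M"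
    by (rule measurable_stopping_time[OF \<tau>]) (use bm_sub[OF BM] bm_space[OF BM] in auto)
  have Rs: "?R \<in> sets M" by (rule run_max_sets[OF BM OUS \<alpha> \<tau>m])
  have R0: "measure M ?R \<ge> 0" by simp
  show ?thesis
  proof (cases "\<delta>^2 \<le> \<alpha> / 4096")
    case False
    have "?A \<subseteq> ?R"
    proof
      fix \<omega> assume "\<omega> \<in> ?A"
      then have "\<omega> \<in> space M" "ereal (2 * l) \<le> run_max X \<tau> \<omega>" by auto
      moreover have "ereal l \<le> ereal (2 * l)" using l by simp
      ultimately have "ereal l \<le> run_max X \<tau> \<omega>" by (meson order.trans)
      with \<open>\<omega> \<in> space M\<close> show "\<omega> \<in> ?R" by simp
    qed
    then have "measure M ?A \<le> measure M ?R" by (rule measure_le_superset[OF fm Rs])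
    then show ?thesis using False by simp
  next
    case True
    define x where "x = (\<delta> * l)^2"
    have x0: "x > 0" using d l by (simp add: x_def)
    define T where "T = (exp x - 1) / \<alpha>"
    have T0: "T > 0" using x0 \<alpha> by (simp add: T_def)
    have Asub: "?A \<subseteq> {\<omega>\<in>space M. \<tau> \<omega> < ennreal T \<and> (\<exists>s. 0 \<le> s \<and> ennreal s \<le> \<tau> \<omega> \<and> \<bar>X s \<omega>\<bar> > 3 * l / 2)}"
      unfolding T_def x_def by (rule A_sub[OF l d])
    have phi: "?phi = 4 * exp (- \<alpha> / (8192 * \<delta>^2))" using True by simp
    have xd: "x = \<delta>^2 * l^2" by (simp add: x_def power_mult_distrib)
    obtain p where p: "measure M ?A \<le> p * measure M ?R" and pphi: "p \<le> ?phi"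
    proof (cases "x \<le> 1/2")
      case True
      have "exp x \<le> 1 + 2 * x" using exp_bound_lemma[of x] True x0 by simp
      then have T2: "T \<le> 2 * x / \<alpha>" using \<alpha> by (simp add: T_def divide_right_mono)
      have "\<alpha> / (8192 * \<delta>^2) \<le> (3*l/16)^2 / (8 * T)"
      proof -
        have "\<alpha> / (8192 * \<delta>^2) \<le> (3*l/16)^2 / (8 * (2 * x / \<alpha>))"
          using \<alpha> d l unfolding xd by (simp add: field_simps power2_eq_square)
        also have "\<dots> \<le> (3*l/16)^2 / (8 * T)"
          by (rule divide_left_mono) (use T2 T0 x0 \<alpha> in auto)
        finally show ?thesis .
      qed
      then have "4 * exp (- ((3*l/16)^2) / (8 * T)) \<le> ?phi" unfolding phi by simp
      then show ?thesis using that case1[OF \<tau> l T0 Asub] by blast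
    next
      case False
      define N where "N = nat \<lceil>\<alpha> * T\<rceil>"
      have N1: "real N \<ge> \<alpha> * T" unfolding N_def by linarith
      have N2: "real N \<le> exp x"
      proof -
        have "\<alpha> * T = exp x - 1" using \<alpha> by (simp add: T_def)
        moreover have "real N \<le> \<alpha> * T + 1"
        proof -
          have y0: "\<alpha> * T > 0" using T0 \<alpha> by simp
          then have "real N = of_int \<lceil>\<alpha> * T\<rceil>" unfolding N_def by simp
          then show ?thesis by linarith
        qed
        ultimately show ?thesis by simp
      qed
      have ee: "exp (- ((l/16)^2) / (8 * (1/\<alpha>))) = exp (- (\<alpha> * l^2 / 2048))"
        by (simp add: power2_eq_square field_simps)
      have "4 * real N * exp (- ((l/16)^2) / (8 * (1/\<alpha>))) \<le> 4 * exp x * exp (- (\<alpha> * l^2 / 2048))"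
        unfolding ee using N2 by simp
      also have "\<dots> = 4 * exp (x - \<alpha> * l^2 / 2048)" by (simp only: mult.assoc mult_exp_exp diff_conv_add_uminus)
      also have "\<dots> \<le> ?phi"
      proof -
        have "x \<le> \<alpha> * l^2 / 4096" using \<open>\<delta>^2 \<le> \<alpha> / 4096\<close> l unfolding xd
          by (metis mult_right_mono zero_le_power2 times_divide_eq_left mult.commute)
        moreover have "\<alpha> / (8192 * \<delta>^2) \<le> \<alpha> * l^2 / 4096"
        proof -
          have "1 / 2 < \<delta>^2 * l^2" using False unfolding xd by simp
          then have "1 < 2 * (\<delta>^2 * l^2)" by simp
          then show ?thesis using \<alpha> d by (simp add: field_simps)
        qed
        ultimately have "x - \<alpha> * l^2 / 2048 \<le> - \<alpha> / (8192 * \<delta>^2)" by simp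
        then show ?thesis unfolding phi by simp
      qed
      finally show ?thesis using that case2[OF \<tau> l T0 N1 Asub] by blast
    qed
    have "measure M ?A \<le> p * measure M ?R" by (rule p)
    also have "\<dots> \<le> ?phi * measure M ?R" by (rule mult_right_mono[OF pphi R0])
    finally show ?thesis .
  qed
qed

end

theorem lemma3p5:
  fixes M :: "'a measure" and F :: "ennreal \<Rightarrow> 'a measure"
    and W X :: "real \<Rightarrow> 'a \<Rightarrow> real" and \<alpha> :: real
  assumes "\<alpha> > 0"
    and "brownian_motion_wrt M F W"
    and "OU_solution M F \<alpha> W X"
  shows "\<exists>\<phi> :: real \<Rightarrow> real. (\<forall>\<delta>>0. 0 \<le> \<phi> \<delta>) \<and> (\<phi> \<longlongrightarrow> 0) (at_right 0) \<and>
     (\<forall>\<tau> :: 'a \<Rightarrow> ennreal. \<forall>(\<delta>::real) (l::real). stopping_time F \<tau> \<and> \<delta> > 0 \<and> l > 0 \<longrightarrow>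
        measure M {\<omega>\<in>space M. run_max X \<tau> \<omega> \<ge> ereal (2 * l) \<and> \<tau> \<omega> \<noteq> \<infinity> \<and>
                      sqrt (ln (1 + \<alpha> * enn2real (\<tau> \<omega>))) < \<delta> * l}
        \<le> \<phi> \<delta> * measure M {\<omega>\<in>space M. run_max X \<tau> \<omega> \<ge> ereal l})"
proof -
  note \<alpha> = assms(1) and BM = assms(2) and OUS = assms(3)
  define \<phi> where "\<phi> \<delta> = (if \<delta>^2 \<le> \<alpha> / 4096 then 4 * exp (- \<alpha> / (8192 * \<delta>^2)) else 1)" for \<delta> :: real
  have nn: "\<forall>\<delta>>0. 0 \<le> \<phi> \<delta>" by (simp add: \<phi>_def)
  have ev: "eventually (\<lambda>\<delta>. 4 * exp (- \<alpha> / (8192 * \<delta>^2)) = \<phi> \<delta>) (at_right 0)"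
    unfolding eventually_at_right_field
  proof (intro exI[of _ "sqrt (\<alpha> / 4096)"] conjI allI impI)
    show "0 < sqrt (\<alpha> / 4096)" using \<alpha> by simp
    fix y :: real assume y: "0 < y" "y < sqrt (\<alpha> / 4096)"
    then have "y^2 < (sqrt (\<alpha> / 4096))^2" by (intro power_strict_mono) auto
    then have "y^2 \<le> \<alpha> / 4096" using \<alpha> by simp
    then show "4 * exp (- \<alpha> / (8192 * y^2)) = \<phi> y" by (simp add: \<phi>_def)
  qed
  have lim: "(\<phi> \<longlongrightarrow> 0) (at_right 0)"
    by (rule Lim_transform_eventually[OF phi_lim[OF \<alpha>] ev])
  have main: "\<forall>\<tau> :: 'a \<Rightarrow> ennreal. \<forall>(\<delta>::real) (l::real). stopping_time F \<tau> \<and> \<delta> > 0 \<and> l > 0 \<longrightarrow>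
        measure M {\<omega>\<in>space M. run_max X \<tau> \<omega> \<ge> ereal (2 * l) \<and> \<tau> \<omega> \<noteq> \<infinity> \<and>
                      sqrt (ln (1 + \<alpha> * enn2real (\<tau> \<omega>))) < \<delta> * l}
        \<le> \<phi> \<delta> * measure M {\<omega>\<in>space M. run_max X \<tau> \<omega> \<ge> ereal l}"
    unfolding \<phi>_def using main_bound[OF BM OUS \<alpha>] by blast
  show ?thesis using nn lim main by blast
qed

end
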